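(* Let $T=(V,E,\gamma,\mathrm{p})$ be a fault tree, run Algorithm $\mathtt{SFPA}$ on $T$, and for $v\in V$ let $g_{v,\infty}$ denote the final value of $g_v$ (i.e. $\mathrm{p}(v)$ if $v$ is a basic event, and otherwise the value of $g_v$ after the substitution loop at $v$ has finished). Let $\mathcal I_v=\{w\in V\mid w\prec v\prec\mathrm{id}(w)\}$. Then $g_{v,\infty}=\langle U(T_v[\mathcal I_v])\rangle$.
   Context: A fault tree (FT) is a tuple $T=(V,E,\gamma,\mathrm{p})$ where $(V,E)$ is a rooted directed acyclic graph (edges point from a node to its children; root $R_T$), $\gamma\colon V\to\{\mathtt{OR},\mathtt{AND},\mathtt{BE}\}$ with $\gamma(v)=\mathtt{BE}$ iff $v$ is a leaf, and $\mathrm{p}\colon\mathrm{BE}(T)\to[0,1]$. A partially controllable fault tree (PCFT) is defined the same way except that $\gamma$ may also take the value $\mathtt{CBE}$ (leaves have label $\mathtt{BE}$ or $\mathtt{CBE}$), and $\mathrm{p}$ is defined on $\mathrm{BE}(T)=\{v\mid\gamma(v)=\mathtt{BE}\}$; let $\mathrm{CBE}(T)=\{v\mid\gamma(v)=\mathtt{CBE}\}$. The structure function $S_T(v,\vec f,\vec c)$ ($\vec f\in\{0,1\}^{\mathrm{BE}(T)}$, $\vec c\in\{0,1\}^{\mathrm{CBE}(T)}$) is $f_v$ on $\mathtt{BE}$, $c_v$ on $\mathtt{CBE}$, disjunction over children on $\mathtt{OR}$, conjunction over children on $\mathtt{AND}$. With $\vec F$ having independent coordinates, $\mathbb P(F_v=1)=\mathrm{p}(v)$,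 the unreliability is $U(T)\colon\{0,1\}^{\mathrm{CBE}(T)}\to[0,1]$, $U(T)(\vec c)=\mathbb P(S_T(R_T,\vec F,\vec c)=1)$. Constructions: $T_v$ is the FT consisting of all descendants of $v$ (including $v$) with root $v$ and inherited structure. For $I\subseteq V$, $T[I]$ is the PCFT obtained by setting $\gamma(w)=\mathtt{CBE}$ and removing all outgoing edges for each $w\in I$, and then keeping only the nodes reachable from the root. Order and dominators: $x\preceq y$ iff there is a directed path (possibly of length $0$) from $y$ to $x$; $x\prec y$ iff $x\preceq y$, $x\neq y$. $w$ dominates $v$ if $v\prec w$ and every path from $R_T$ to $v$ contains $w$. For $v\neq R_T$, $\mathrm{id}(v)$ is the unique dominator of $v$ with $\mathrm{id}(v)\preceq w'$ for all dominators $w'$ of $v$. Squarefree polynomial algebra: $\mathcal A(X)$ for finite $X$ consists of formal sums $\sum_{Y\subseteq X}\alpha_Y\prod_{x\in Y}\mathsf F_x$ with polynomial arithmetic subject to $\mathsf F_x^2=\mathsf F_x$; $\mathcal A(X)\subseteq\mathcal A(X')$ for $X\subseteq X'$. For $x\in X\setminus Y$, $\alpha\in\mathcal A(X)$, $\beta\in\mathcal A(Y)$, the substitution $\alpha[\mathsf F_x\mapsto\beta]=\beta\cdot\sum_{Z\ni x}\alpha_Z\prod_{x'\in Z\setminus\{x\}}\mathsf F_{x'}+\sum_{Z\not\ni x}\alpha_Z\prod_{x'\in Z}\mathsf F_{x'}$. For $g\colon\{0,1\}^X\to\mathbb R$, $\langle g\rangle$ is the unique element of $\mathcal A(X)$ with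 $g(\vec c)=\langle g\rangle[\forall x\colon\mathsf F_x\mapsto c_x]$ for all $\vec c$. Algorithm $\mathtt{SFPA}(T)$: set $\mathsf{ToDo}\leftarrow V$. While $\mathsf{ToDo}\neq\varnothing$: pick $v\in\mathsf{ToDo}$ minimal w.r.t. $\preceq$ and remove it. If $\gamma(v)=\mathtt{BE}$, set $g_v\leftarrow\mathrm{p}(v)$. Otherwise set $g_v\leftarrow 1-\prod_{w\in\mathrm{ch}(v)}(1-\mathsf F_w)$ if $\gamma(v)=\mathtt{OR}$, and $g_v\leftarrow\prod_{w\in\mathrm{ch}(v)}\mathsf F_w$ if $\gamma(v)=\mathtt{AND}$ ($\mathrm{ch}(v)$ = children of $v$); then set $\mathsf{ToDo}_v\leftarrow\{w\in V\mid\mathrm{id}(w)=v\}$ and, while $\mathsf{ToDo}_v\neq\varnothing$, pick $w\in\mathsf{ToDo}_v$ maximal w.r.t. $\preceq$, remove it, and set $g_v\leftarrow g_v[\mathsf F_w\mapsto g_w]$. Return $g_{R_T}$. *)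

theory Defs
  imports Complex_Main
begin

datatype gate = OR | AND | BE | CBE

record 'v ft =
  nodes :: "'v set"
  edges :: "('v \<times> 'v) set"   \<comment> \<open>edges point from a node to its children\<close>
  root  :: 'v
  gam   :: "'v \<Rightarrow> gate"
  prob  :: "'v \<Rightarrow> real"

definition children :: "'v ft \<Rightarrow> 'v \<Rightarrow> 'v set" where
  "children T v = {w. (v, w) \<in> edges T}"

definition is_pcft :: "'v ft \<Rightarrow> bool" where
  "is_pcft T \<longleftrightarrow>
     finite (nodes T) \<and> edges T \<subseteq> nodes T \<times> nodes T \<and> acyclic (edges T) \<and>
     root T \<in> nodes T \<and> (\<forall>v\<in>nodes T. (root T, v) \<in> (edges T)\<^sup>*) \<and>
     (\<forall>v\<in>nodes T. gam T v \<in> {BE, CBE} \<longleftrightarrow> children T v = {}) \<and>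
     (\<forall>v\<in>nodes T. gam T v = BE \<longrightarrow> 0 \<le> prob T v \<and> prob T v \<le> 1)"

definition is_ft :: "'v ft \<Rightarrow> bool" where
  "is_ft T \<longleftrightarrow> is_pcft T \<and> (\<forall>v\<in>nodes T. gam T v \<noteq> CBE)"

definition BEs :: "'v ft \<Rightarrow> 'v set" where
  "BEs T = {v \<in> nodes T. gam T v = BE}"

definition CBEs :: "'v ft \<Rightarrow> 'v set" where
  "CBEs T = {v \<in> nodes T. gam T v = CBE}"

text \<open>Structure function: fails T F C v means S_T(v, F, C) = 1, where F is the set of
  failed basic events and C the set of activated controllable basic events (0/1 vectors as sets).
  Defined as the least fixed point of the defining equations (which on a finite DAG is the
  unique solution of the recursive definition).\<close>
inductive fails :: "'v ft \<Rightarrow> 'v set \<Rightarrow> 'v set \<Rightarrow> 'v \<Rightarrow> bool" for T F C where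
  fails_BE:  "v \<in> nodes T \<Longrightarrow> gam T v = BE \<Longrightarrow> v \<in> F \<Longrightarrow> fails T F C v"
| fails_CBE: "v \<in> nodes T \<Longrightarrow> gam T v = CBE \<Longrightarrow> v \<in> C \<Longrightarrow> fails T F C v"
| fails_OR:  "v \<in> nodes T \<Longrightarrow> gam T v = OR \<Longrightarrow> (v, w) \<in> edges T \<Longrightarrow> fails T F C w \<Longrightarrow> fails T F C v"
| fails_AND: "v \<in> nodes T \<Longrightarrow> gam T v = AND \<Longrightarrow> (\<forall>w. (v, w) \<in> edges T \<longrightarrow> fails T F C w)
              \<Longrightarrow> fails T F C v"

text \<open>Unreliability U(T)(C) = P(S_T(R_T, F, C) = 1) with independent basic events,
  written out as a finite sum over the set A of failed basic events.\<close>
definition unrel :: "'v ft \<Rightarrow> 'v set \<Rightarrow> real" where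
  "unrel T C = (\<Sum>A\<in>Pow (BEs T).
      (\<Prod>v\<in>A. prob T v) * (\<Prod>v\<in>BEs T - A. 1 - prob T v) *
      (if fails T A C (root T) then 1 else 0))"

definition subtree :: "'v ft \<Rightarrow> 'v \<Rightarrow> 'v ft" where
  "subtree T v = (let D = {w. (v, w) \<in> (edges T)\<^sup>*} in
     T\<lparr>nodes := D, edges := {(a, b) \<in> edges T. a \<in> D}, root := v\<rparr>)"

definition restrict_cut :: "'v ft \<Rightarrow> 'v set \<Rightarrow> 'v ft" where
  "restrict_cut T I = (let E' = {(a, b) \<in> edges T. a \<notin> I};
                  N = {w. (root T, w) \<in> E'\<^sup>*} in
     T\<lparr>nodes := N, edges := {(a, b) \<in> E'. a \<in> N},
       gam := (\<lambda>w. if w \<in> I then CBE else gam T w)\<rparr>)"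

definition ple :: "'v ft \<Rightarrow> 'v \<Rightarrow> 'v \<Rightarrow> bool" where
  "ple T x y \<longleftrightarrow> (y, x) \<in> (edges T)\<^sup>*"

definition plt :: "'v ft \<Rightarrow> 'v \<Rightarrow> 'v \<Rightarrow> bool" where
  "plt T x y \<longleftrightarrow> ple T x y \<and> x \<noteq> y"

definition is_path :: "'v ft \<Rightarrow> 'v list \<Rightarrow> 'v \<Rightarrow> 'v \<Rightarrow> bool" where
  "is_path T xs a b \<longleftrightarrow> xs \<noteq> [] \<and> hd xs = a \<and> last xs = b \<and>
     (\<forall>i. Suc i < length xs \<longrightarrow> (xs ! i, xs ! Suc i) \<in> edges T)"

definition dominates :: "'v ft \<Rightarrow> 'v \<Rightarrow> 'v \<Rightarrow> bool" where
  "dominates T w v \<longleftrightarrow> plt T v w \<and> (\<forall>xs. is_path T xs (root T) v \<longrightarrow> w \<in> set xs)"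

text \<open>Immediate dominator (meaningful for v \<noteq> root).\<close>
definition idom :: "'v ft \<Rightarrow> 'v \<Rightarrow> 'v" where
  "idom T v = (THE w. dominates T w v \<and> (\<forall>w'. dominates T w' v \<longrightarrow> ple T w w'))"

definition Iset :: "'v ft \<Rightarrow> 'v \<Rightarrow> 'v set" where
  "Iset T v = {w \<in> nodes T. plt T w v \<and> plt T v (idom T w)}"

text \<open>An element of A(X) is represented by its coefficient function Y \<mapsto> \<alpha>_Y
  (coefficient of the monomial \<Prod>_{x\<in>Y} F_x).\<close>
type_synonym 'v sfpoly = "'v set \<Rightarrow> real"

definition inA :: "'v set \<Rightarrow> 'v sfpoly \<Rightarrow> bool" where
  "inA X \<alpha> \<longleftrightarrow> (\<forall>Y. \<alpha> Y \<noteq> 0 \<longrightarrow> Y \<subseteq> X)"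

definition pconst :: "real \<Rightarrow> 'v sfpoly" where
  "pconst a = (\<lambda>Y. if Y = {} then a else 0)"

definition pvar :: "'v \<Rightarrow> 'v sfpoly" where
  "pvar x = (\<lambda>Y. if Y = {x} then 1 else 0)"

definition padd :: "'v sfpoly \<Rightarrow> 'v sfpoly \<Rightarrow> 'v sfpoly" where
  "padd \<alpha> \<beta> = (\<lambda>Y. \<alpha> Y + \<beta> Y)"

definition psub :: "'v sfpoly \<Rightarrow> 'v sfpoly \<Rightarrow> 'v sfpoly" where
  "psub \<alpha> \<beta> = (\<lambda>Y. \<alpha> Y - \<beta> Y)"

text \<open>Product: polynomial multiplication subject to F_x^2 = F_x, i.e. monomials multiply by union.\<close>
definition pmult :: "'v sfpoly \<Rightarrow> 'v sfpoly \<Rightarrow> 'v sfpoly" where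
  "pmult \<alpha> \<beta> = (\<lambda>Z. \<Sum>Y1\<in>Pow Z. \<Sum>Y2\<in>Pow Z. if Y1 \<union> Y2 = Z then \<alpha> Y1 * \<beta> Y2 else 0)"

definition pprod :: "('v \<Rightarrow> 'v sfpoly) \<Rightarrow> 'v set \<Rightarrow> 'v sfpoly" where
  "pprod f A = Finite_Set.fold (\<lambda>w acc. pmult (f w) acc) (pconst 1) A"

text \<open>Substitution \<alpha>[F_x \<mapsto> \<beta>].\<close>
definition psubst :: "'v sfpoly \<Rightarrow> 'v \<Rightarrow> 'v sfpoly \<Rightarrow> 'v sfpoly" where
  "psubst \<alpha> x \<beta> = padd (pmult \<beta> (\<lambda>Z. if x \<notin> Z then \<alpha> (insert x Z) else 0))
                         (\<lambda>Z. if x \<in> Z then 0 else \<alpha> Z)"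

text \<open>\<alpha>[\<forall>x\<in>X. F_x \<mapsto> c_x] for the 0/1 vector c given by the set C \<subseteq> X of its 1-entries.\<close>
definition peval :: "'v set \<Rightarrow> 'v sfpoly \<Rightarrow> 'v set \<Rightarrow> real" where
  "peval X \<alpha> C = (\<Sum>Y\<in>Pow X. \<alpha> Y * (\<Prod>x\<in>Y. if x \<in> C then 1 else 0))"

definition poly_of :: "'v set \<Rightarrow> ('v set \<Rightarrow> real) \<Rightarrow> 'v sfpoly" where
  "poly_of X g = (THE \<alpha>. inA X \<alpha> \<and> (\<forall>C. C \<subseteq> X \<longrightarrow> peval X \<alpha> C = g C))"

section \<open>Algorithm SFPA (all possible runs, i.e. all admissible choices)\<close>

definition init_poly :: "'v ft \<Rightarrow> 'v \<Rightarrow> 'v sfpoly" where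
  "init_poly T v = (if gam T v = OR
      then psub (pconst 1) (pprod (\<lambda>w. psub (pconst 1) (pvar w)) (children T v))
      else pprod pvar (children T v))"

definition ToDo_v :: "'v ft \<Rightarrow> 'v \<Rightarrow> 'v set" where
  "ToDo_v T v = {w \<in> nodes T. w \<noteq> root T \<and> idom T w = v}"

text \<open>Inner loop: inner_run T g S acc res: starting with g_v = acc and ToDo_v = S,
  repeatedly pick a maximal w and substitute; res is the final g_v.\<close>
inductive inner_run :: "'v ft \<Rightarrow> ('v \<Rightarrow> 'v sfpoly) \<Rightarrow> 'v set \<Rightarrow> 'v sfpoly \<Rightarrow> 'v sfpoly \<Rightarrow> bool"
  for T g where
  inner_done: "inner_run T g {} acc acc"
| inner_step: "w \<in> S \<Longrightarrow> (\<forall>u\<in>S. \<not> plt T w u) \<Longrightarrow>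
     inner_run T g (S - {w}) (psubst acc w (g w)) res \<Longrightarrow> inner_run T g S acc res"

text \<open>Outer loop: sfpa_run T ToDo g g': from state (ToDo, g) the algorithm can
  terminate with the family of final values g'.\<close>
inductive sfpa_run :: "'v ft \<Rightarrow> 'v set \<Rightarrow> ('v \<Rightarrow> 'v sfpoly) \<Rightarrow> ('v \<Rightarrow> 'v sfpoly) \<Rightarrow> bool"
  for T where
  sfpa_done: "sfpa_run T {} g g"
| sfpa_BE: "v \<in> ToDo \<Longrightarrow> (\<forall>u\<in>ToDo. \<not> plt T u v) \<Longrightarrow> gam T v = BE \<Longrightarrow>
     sfpa_run T (ToDo - {v}) (g(v := pconst (prob T v))) g' \<Longrightarrow> sfpa_run T ToDo g g'"
| sfpa_gate: "v \<in> ToDo \<Longrightarrow> (\<forall>u\<in>ToDo. \<not> plt T u v) \<Longrightarrow> gam T v \<noteq> BE \<Longrightarrow>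
     inner_run T g (ToDo_v T v) (init_poly T v) h \<Longrightarrow>
     sfpa_run T (ToDo - {v}) (g(v := h)) g' \<Longrightarrow> sfpa_run T ToDo g g'"

end

theory Submission
  imports Defs
begin

lemma ind_prod: "finite Y \<Longrightarrow> (\<Prod>x\<in>Y. if x \<in> C then 1 else 0 :: real) = (if Y \<subseteq> C then 1 else 0)"
  by (induction Y rule: finite_induct) auto

lemma peval_alt: "finite X \<Longrightarrow> peval X a C = (\<Sum>Y\<in>Pow X. a Y * (if Y \<subseteq> C then 1 else 0))"
  unfolding peval_def
proof (rule sum.cong[OF refl])
  fix Y assume "finite X" "Y \<in> Pow X"
  then have "finite Y" using finite_subset by auto
  then show "a Y * (\<Prod>x\<in>Y. if x \<in> C then 1 else 0) = a Y * (if Y \<subseteq> C then 1 else 0)"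
    by (simp add: ind_prod)
qed

lemma peval_mult:
  assumes X: "finite X"
  shows "peval X (pmult a b) C = peval X a C * peval X b C"
proof -
  let ?i = "\<lambda>Y. (if Y \<subseteq> C then 1 else 0 :: real)"
  have "peval X (pmult a b) C =
     (\<Sum>Z\<in>Pow X. (\<Sum>Y1\<in>Pow X. \<Sum>Y2\<in>Pow X. if Y1 \<union> Y2 = Z then a Y1 * b Y2 else 0) * ?i Z)"
  proof (unfold peval_alt[OF X], rule sum.cong[OF refl])
    fix Z assume Z: "Z \<in> Pow X"
    have fZ: "finite Z" using Z X finite_subset by auto
    have "pmult a b Z = (\<Sum>Y1\<in>Pow X. \<Sum>Y2\<in>Pow X. if Y1 \<union> Y2 = Z then a Y1 * b Y2 else 0)"
      unfolding pmult_def
    proof (rule sum.mono_neutral_cong_left)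
      show "finite (Pow X)" using X by simp
      show "Pow Z \<subseteq> Pow X" using Z by auto
      show "\<forall>i\<in>Pow X - Pow Z. (\<Sum>Y2\<in>Pow X. if i \<union> Y2 = Z then a i * b Y2 else 0) = 0"
        by (auto intro!: sum.neutral)
      fix Y1 assume "Y1 \<in> Pow Z"
      show "(\<Sum>Y2\<in>Pow Z. if Y1 \<union> Y2 = Z then a Y1 * b Y2 else 0) =
            (\<Sum>Y2\<in>Pow X. if Y1 \<union> Y2 = Z then a Y1 * b Y2 else 0)"
        by (rule sum.mono_neutral_cong_left) (use X Z in auto)
    qed
    then show "pmult a b Z * ?i Z = (\<Sum>Y1\<in>Pow X. \<Sum>Y2\<in>Pow X. if Y1 \<union> Y2 = Z then a Y1 * b Y2 else 0) * ?i Z"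
      by simp
  qed
  also have "\<dots> = (\<Sum>Z\<in>Pow X. \<Sum>Y1\<in>Pow X. \<Sum>Y2\<in>Pow X. if Y1 \<union> Y2 = Z then a Y1 * b Y2 * ?i (Y1 \<union> Y2) else 0)"
    by (auto simp: sum_distrib_right intro!: sum.cong)
  also have "\<dots> = (\<Sum>Y1\<in>Pow X. \<Sum>Y2\<in>Pow X. \<Sum>Z\<in>Pow X. if Y1 \<union> Y2 = Z then a Y1 * b Y2 * ?i (Y1 \<union> Y2) else 0)"
    by (subst sum.swap) (auto intro!: sum.cong sum.swap)
  also have "\<dots> = (\<Sum>Y1\<in>Pow X. \<Sum>Y2\<in>Pow X. a Y1 * b Y2 * ?i (Y1 \<union> Y2))"
  proof (intro sum.cong refl)
    fix Y1 Y2 assume "Y1 \<in> Pow X" "Y2 \<in> Pow X"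
    then have "Y1 \<union> Y2 \<in> Pow X" by auto
    then show "(\<Sum>Z\<in>Pow X. if Y1 \<union> Y2 = Z then a Y1 * b Y2 * ?i (Y1 \<union> Y2) else 0) = a Y1 * b Y2 * ?i (Y1 \<union> Y2)"
      using X by (simp add: sum.delta)
  qed
  also have "\<dots> = (\<Sum>Y1\<in>Pow X. a Y1 * ?i Y1) * (\<Sum>Y2\<in>Pow X. b Y2 * ?i Y2)"
    by (auto simp: sum_product intro!: sum.cong)
  finally show ?thesis by (simp add: peval_alt[OF X])
qed

lemma peval_sub: "finite X \<Longrightarrow> C \<subseteq> X \<Longrightarrow> peval X a C = (\<Sum>Y\<in>Pow C. a Y)"
  unfolding peval_alt
  by (rule sum.mono_neutral_cong_right) auto

lemma peval_inj:
  assumes X: "finite X" and eq: "\<And>C. C \<subseteq> X \<Longrightarrow> peval X a C = peval X b C"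
  shows "Y \<subseteq> X \<Longrightarrow> a Y = b Y"
proof -
  assume "Y \<subseteq> X"
  moreover have "finite Y" using \<open>Y \<subseteq> X\<close> X finite_subset by auto
  from \<open>finite Y\<close> \<open>Y \<subseteq> X\<close> show ?thesis
  proof (induction Y rule: finite_psubset_induct)
    case (psubset Y)
    have fY: "finite (Pow Y)" using psubset by simp
    have PY: "Pow Y = insert Y (Pow Y - {Y})" by auto
    have "(\<Sum>Y'\<in>Pow Y. a Y') = (\<Sum>Y'\<in>Pow Y. b Y')"
      using eq[of Y] psubset peval_sub[OF X] by simp
    then have "a Y + (\<Sum>Y'\<in>Pow Y - {Y}. a Y') = b Y + (\<Sum>Y'\<in>Pow Y - {Y}. b Y')"
      using fY by (simp add: sum.remove[of "Pow Y" Y])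
    moreover have "(\<Sum>Y'\<in>Pow Y - {Y}. a Y') = (\<Sum>Y'\<in>Pow Y - {Y}. b Y')"
      by (rule sum.cong[OF refl]) (use psubset in auto)
    ultimately show ?case by simp
  qed
qed

lemma pmult_comm: "pmult a b = pmult b a"
  unfolding pmult_def
  by (rule ext, subst sum.swap) (auto simp: Un_commute mult.commute intro!: sum.cong)

lemma pmult_inf: "infinite Z \<Longrightarrow> pmult a b Z = 0"
  unfolding pmult_def by simp

lemma pmult_assoc: "pmult a (pmult b c) = pmult (pmult a b) c"
proof
  fix Z
  show "pmult a (pmult b c) Z = pmult (pmult a b) c Z"
  proof (cases "finite Z")
    case True
    show ?thesis
      by (rule peval_inj[OF True, of _ _ Z]) (simp_all add: peval_mult[OF True])
  qed (simp add: pmult_inf)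
qed

lemma cfc_pmult: "comp_fun_commute (\<lambda>w acc. pmult (f w) acc)"
  unfolding comp_fun_commute_def
  by (auto simp: fun_eq_iff pmult_assoc pmult_comm[of "f _" "f _"])

lemma pprod_empty[simp]: "pprod f {} = pconst 1"
  unfolding pprod_def by simp

lemma pprod_insert: "finite A \<Longrightarrow> x \<notin> A \<Longrightarrow> pprod f (insert x A) = pmult (f x) (pprod f A)"
proof -
  interpret comp_fun_commute "\<lambda>w acc. pmult (f w) acc" by (rule cfc_pmult)
  assume "finite A" "x \<notin> A"
  then show ?thesis unfolding pprod_def by simp
qed

lemma peval_const: "finite X \<Longrightarrow> peval X (pconst c) C = c"
proof -
  assume X: "finite X"
  have "peval X (pconst c) C = (\<Sum>Y\<in>Pow X. if Y = {} then c else 0)"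
    unfolding peval_alt[OF X] pconst_def by (rule sum.cong) auto
  then show ?thesis using X by (simp add: sum.delta')
qed

lemma peval_var: "finite X \<Longrightarrow> x \<in> X \<Longrightarrow> peval X (pvar x) C = (if x \<in> C then 1 else 0)"
proof -
  assume X: "finite X" "x \<in> X"
  have "peval X (pvar x) C = (\<Sum>Y\<in>Pow X. if Y = {x} then (if x \<in> C then 1 else 0) else 0)"
    unfolding peval_alt[OF X(1)] pvar_def by (rule sum.cong) auto
  then show ?thesis using X by (simp add: sum.delta')
qed

lemma peval_add: "peval X (padd a b) C = peval X a C + peval X b C"
  unfolding peval_def padd_def by (simp add: distrib_right sum.distrib)

lemma peval_psub: "peval X (psub a b) C = peval X a C - peval X b C"
  unfolding peval_def psub_def by (simp add: left_diff_distrib sum_subtractf)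

lemma peval_pprod: assumes "finite X" "finite A" shows "peval X (pprod f A) C = (\<Prod>x\<in>A. peval X (f x) C)"
  using assms(2) by (induction A rule: finite_induct) (simp_all add: peval_const[OF assms(1)] pprod_insert peval_mult[OF assms(1)])

lemma inA_mono: "inA X a \<Longrightarrow> X \<subseteq> Y \<Longrightarrow> inA Y a"
  unfolding inA_def by blast

lemma inA_const: "inA {} (pconst c)"
  unfolding inA_def pconst_def by auto

lemma inA_var: "inA {x} (pvar x)"
  unfolding inA_def pvar_def by auto

lemma inA_add: "inA X a \<Longrightarrow> inA Y b \<Longrightarrow> inA (X \<union> Y) (padd a b)"
  unfolding inA_def padd_def by (metis add.right_neutral add_0 le_supI1 le_supI2)

lemma inA_sub: "inA X a \<Longrightarrow> inA Y b \<Longrightarrow> inA (X \<union> Y) (psub a b)"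
  unfolding inA_def psub_def by (metis diff_zero diff_self le_supI1 le_supI2)

lemma inA_mult: "inA X a \<Longrightarrow> inA Y b \<Longrightarrow> inA (X \<union> Y) (pmult a b)"
  unfolding inA_def pmult_def
proof (intro allI impI)
  fix Z
  assume a: "\<forall>Y'. a Y' \<noteq> 0 \<longrightarrow> Y' \<subseteq> X" and b: "\<forall>Y'. b Y' \<noteq> 0 \<longrightarrow> Y' \<subseteq> Y"
    and nz: "(\<Sum>Y1\<in>Pow Z. \<Sum>Y2\<in>Pow Z. if Y1 \<union> Y2 = Z then a Y1 * b Y2 else 0) \<noteq> 0"
  then obtain Y1 where "(\<Sum>Y2\<in>Pow Z. if Y1 \<union> Y2 = Z then a Y1 * b Y2 else 0) \<noteq> 0"
    by (meson sum.not_neutral_contains_not_neutral)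
  then obtain Y2 where "(if Y1 \<union> Y2 = Z then a Y1 * b Y2 else 0) \<noteq> 0"
    using sum.not_neutral_contains_not_neutral by blast
  then show "Z \<subseteq> X \<union> Y" using a b by (auto split: if_splits)
qed

lemma inA_pprod: "finite A \<Longrightarrow> (\<And>x. x \<in> A \<Longrightarrow> inA X (f x)) \<Longrightarrow> inA X (pprod f A)"
proof (induction A rule: finite_induct)
  case empty then show ?case using inA_const inA_mono by fastforce
next
  case (insert x F) then show ?case using inA_mult[of X "f x" X "pprod f F"] by (simp add: pprod_insert)
qed

lemma peval_inA: "inA X a \<Longrightarrow> X \<subseteq> Y \<Longrightarrow> finite Y \<Longrightarrow> peval Y a C = peval X a C"
  unfolding peval_def inA_def
  by (rule sum.mono_neutral_cong_right) auto

lemma inA_psubst: "inA X a \<Longrightarrow> inA Y b \<Longrightarrow> inA ((X - {w}) \<union> Y) (psubst a w b)"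
proof -
  assume a: "inA X a" and b: "inA Y b"
  have a1: "inA (X - {w}) (\<lambda>Z. if w \<notin> Z then a (insert w Z) else 0)"
    using a unfolding inA_def by auto
  have a0: "inA (X - {w}) (\<lambda>Z. if w \<in> Z then 0 else a Z)"
    using a unfolding inA_def by auto
  show ?thesis unfolding psubst_def
    by (rule inA_mono[OF inA_add[OF inA_mult[OF b a1] a0]]) auto
qed

lemma peval_split:
  assumes X: "finite X" and w: "w \<in> X"
  shows "peval X a D = (if w \<in> D then peval X (\<lambda>Z. if w \<notin> Z then a (insert w Z) else 0) D else 0)
             + peval X (\<lambda>Z. if w \<in> Z then 0 else a Z) D"
proof -
  let ?i = "\<lambda>Y. (if Y \<subseteq> D then 1 else 0 :: real)"
  have fP: "finite (Pow X)" using X by simp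
  have "peval X a D = (\<Sum>Y\<in>{Y\<in>Pow X. w \<in> Y}. a Y * ?i Y) + (\<Sum>Y\<in>{Y\<in>Pow X. w \<notin> Y}. a Y * ?i Y)"
  proof -
    have PX: "Pow X = {Y\<in>Pow X. w \<in> Y} \<union> {Y\<in>Pow X. w \<notin> Y}" by auto
    show ?thesis unfolding peval_alt[OF X]
      by (subst PX, rule sum.union_disjoint) (use X in auto)
  qed
  moreover have "(\<Sum>Y\<in>{Y\<in>Pow X. w \<notin> Y}. a Y * ?i Y) = peval X (\<lambda>Z. if w \<in> Z then 0 else a Z) D"
    unfolding peval_alt[OF X] by (rule sum.mono_neutral_cong_left) (use X in force)+
  moreover have "(\<Sum>Y\<in>{Y\<in>Pow X. w \<in> Y}. a Y * ?i Y) = (\<Sum>Z\<in>{Z\<in>Pow X. w \<notin> Z}. a (insert w Z) * ?i (insert w Z))"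
    by (rule sum.reindex_bij_witness[of _ "insert w" "\<lambda>Y. Y - {w}"]) (use w in \<open>auto simp: insert_absorb\<close>)
  moreover have "\<dots> = (if w \<in> D then (\<Sum>Z\<in>{Z\<in>Pow X. w \<notin> Z}. a (insert w Z) * ?i Z) else 0)"
    by (cases "w \<in> D") (auto intro!: sum.cong)
  moreover have "(\<Sum>Z\<in>{Z\<in>Pow X. w \<notin> Z}. a (insert w Z) * ?i Z) = peval X (\<lambda>Z. if w \<notin> Z then a (insert w Z) else 0) D"
    unfolding peval_alt[OF X] by (rule sum.mono_neutral_cong_left) (use X in force)+
  ultimately show ?thesis by simp
qed

lemma peval_wfree:
  assumes X: "finite X" and fr: "\<And>Z. w \<in> Z \<Longrightarrow> a Z = 0"
  shows "peval X a D = peval X a (D - {w})"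
  unfolding peval_alt[OF X] by (rule sum.cong) (use fr in auto)

lemma peval_psubst:
  assumes X: "finite X" and w: "w \<in> X"
  shows "peval X (psubst a w b) C = peval X b C * peval X a (insert w C) + (1 - peval X b C) * peval X a (C - {w})"
proof -
  define a1 where "a1 = (\<lambda>Z. if w \<notin> Z then a (insert w Z) else 0)"
  define a0 where "a0 = (\<lambda>Z. if w \<in> Z then 0 else a Z)"
  have e1: "peval X a1 D = peval X a1 (C - {w})" if "D - {w} = C - {w}" for D
  proof -
    have "peval X a1 D = peval X a1 (D - {w})" by (rule peval_wfree[OF X]) (simp add: a1_def)
    then show ?thesis using that by simp
  qed
  have e0: "peval X a0 D = peval X a0 (C - {w})" if "D - {w} = C - {w}" for D
  proof -
    have "peval X a0 D = peval X a0 (D - {w})" by (rule peval_wfree[OF X]) (simp add: a0_def)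
    then show ?thesis using that by simp
  qed
  have s: "peval X a D = (if w \<in> D then peval X a1 D else 0) + peval X a0 D" for D
    unfolding a1_def a0_def by (rule peval_split[OF X w])
  have "psubst a w b = padd (pmult b a1) a0" unfolding psubst_def a1_def a0_def by simp
  then have "peval X (psubst a w b) C = peval X b C * peval X a1 C + peval X a0 C"
    by (simp add: peval_add peval_mult[OF X])
  moreover have "peval X a (insert w C) = peval X a1 (C - {w}) + peval X a0 (C - {w})"
    using s[of "insert w C"] e1[of "insert w C"] e0[of "insert w C"] by simp
  moreover have "peval X a (C - {w}) = peval X a0 (C - {w})"
    using s[of "C - {w}"] by simp
  moreover have "peval X a1 C = peval X a1 (C - {w})" "peval X a0 C = peval X a0 (C - {w})"
    using e1[of C] e0[of C] by simp_all
  ultimately show ?thesis by (simp only:) (simp add: algebra_simps)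
qed

lemma poly_of_eq:
  assumes X: "finite X" and a: "inA X a" and ev: "\<And>C. C \<subseteq> X \<Longrightarrow> peval X a C = g C"
  shows "poly_of X g = a"
  unfolding poly_of_def
proof (rule the_equality)
  show "inA X a \<and> (\<forall>C. C \<subseteq> X \<longrightarrow> peval X a C = g C)" using a ev by simp
  fix b assume b: "inA X b \<and> (\<forall>C. C \<subseteq> X \<longrightarrow> peval X b C = g C)"
  show "b = a"
  proof
    fix Y show "b Y = a Y"
    proof (cases "Y \<subseteq> X")
      case True
      have "\<And>C. C \<subseteq> X \<Longrightarrow> peval X b C = peval X a C" using b ev by metis
      then show ?thesis by (rule peval_inj[OF X _ True])
    next
      case False
      then show ?thesis using a b unfolding inA_def by metis
    qed
  qed
qed

locale ftl =
  fixes T :: "'v ft"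
  assumes ft: "is_ft T"
begin

abbreviation "E \<equiv> edges T"
abbreviation "N \<equiv> nodes T"
abbreviation "r \<equiv> root T"

definition Ed :: "'v \<Rightarrow> ('v \<times> 'v) set" where
  "Ed d = {(p, q) \<in> E. p \<noteq> d \<and> q \<noteq> d}"

lemma finN: "finite N" and EN: "E \<subseteq> N \<times> N" and acyc: "acyclic E" and rootN: "r \<in> N"
  and reach: "x \<in> N \<Longrightarrow> (r, x) \<in> E\<^sup>*"
  and leaf: "x \<in> N \<Longrightarrow> gam T x \<in> {BE, CBE} \<longleftrightarrow> children T x = {}"
  and noCBE: "x \<in> N \<Longrightarrow> gam T x \<noteq> CBE"
  using ft unfolding is_ft_def is_pcft_def by auto

lemma finE: "finite E"
  using finN EN by (meson finite_SigmaI finite_subset)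

lemma wfE: "wf E"
  using finE acyc by (rule finite_acyclic_wf)

lemma edgeN: "(a, b) \<in> E \<Longrightarrow> a \<in> N \<and> b \<in> N"
  using EN by auto

lemma rtN: "(a, b) \<in> E\<^sup>* \<Longrightarrow> a \<in> N \<Longrightarrow> b \<in> N"
  by (induction rule: rtrancl_induct) (auto dest: edgeN)

lemma tN: "(a, b) \<in> E\<^sup>+ \<Longrightarrow> a \<in> N \<and> b \<in> N"
  by (induction rule: trancl_induct) (auto dest: edgeN)

lemma antisym: "(a, b) \<in> E\<^sup>* \<Longrightarrow> (b, a) \<in> E\<^sup>* \<Longrightarrow> a = b"
  using acyc unfolding acyclic_def
  by (metis rtrancl_eq_or_trancl rtrancl_trancl_trancl)

lemma irr: "(a, a) \<notin> E\<^sup>+"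
  using acyc unfolding acyclic_def by blast

lemma tr_neq: "(a, b) \<in> E\<^sup>+ \<Longrightarrow> a \<noteq> b"
  using irr by blast

lemma tr_asym: "(a, b) \<in> E\<^sup>+ \<Longrightarrow> (b, a) \<in> E\<^sup>* \<Longrightarrow> False"
  using irr by (meson trancl_rtrancl_trancl)

lemma plt_iff: "plt T x y \<longleftrightarrow> (y, x) \<in> E\<^sup>+"
  unfolding plt_def ple_def using tr_neq by (auto simp: rtrancl_eq_or_trancl)

lemma ple_iff: "ple T x y \<longleftrightarrow> (y, x) \<in> E\<^sup>*"
  unfolding ple_def by simp

lemma is_path_single: "is_path T [x] a b \<longleftrightarrow> a = x \<and> b = x"
  unfolding is_path_def by auto

lemma is_path_cons: "is_path T (x # y # ys) a b \<longleftrightarrow> a = x \<and> (x, y) \<in> E \<and> is_path T (y # ys) y b"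
proof
  assume p: "is_path T (x # y # ys) a b"
  have "\<forall>i. Suc i < length (y # ys) \<longrightarrow> ((y # ys) ! i, (y # ys) ! Suc i) \<in> E"
  proof (intro allI impI)
    fix i assume "Suc i < length (y # ys)"
    moreover have P: "\<forall>i. Suc i < length (x#y#ys) \<longrightarrow> ((x#y#ys) ! i, (x#y#ys) ! Suc i) \<in> E"
      using p unfolding is_path_def by blast
    ultimately show "((y # ys) ! i, (y # ys) ! Suc i) \<in> E"
      using P[rule_format, of "Suc i"] by simp
  qed
  moreover have "((x # y # ys) ! 0, (x # y # ys) ! Suc 0) \<in> E"
  proof -
    have "Suc 0 < length (x#y#ys) \<longrightarrow> ((x#y#ys) ! 0, (x#y#ys) ! Suc 0) \<in> E"
      using p unfolding is_path_def by blast
    then show ?thesis by simp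
  qed
  ultimately show "a = x \<and> (x, y) \<in> E \<and> is_path T (y # ys) y b"
    using p unfolding is_path_def by simp
next
  assume h: "a = x \<and> (x, y) \<in> E \<and> is_path T (y # ys) y b"
  show "is_path T (x # y # ys) a b"
    unfolding is_path_def
  proof (intro conjI allI impI)
    fix i assume i: "Suc i < length (x # y # ys)"
    show "((x # y # ys) ! i, (x # y # ys) ! Suc i) \<in> E"
    proof (cases i)
      case 0 then show ?thesis using h by simp
    next
      case (Suc j) then show ?thesis using h i unfolding is_path_def by auto
    qed
  qed (use h in \<open>auto simp: is_path_def\<close>)
qed

lemma path_rt: "is_path T xs a b \<Longrightarrow> d \<notin> set xs \<Longrightarrow> (a, b) \<in> (Ed d)\<^sup>*"
proof (induction xs arbitrary: a)
  case Nil then show ?case by (simp add: is_path_def)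
next
  case (Cons x xs)
  show ?case
  proof (cases xs)
    case Nil then show ?thesis using Cons by (simp add: is_path_single)
  next
    case (Cons y ys)
    then have "a = x" "(x, y) \<in> E" "is_path T xs y b" using Cons.prems by (auto simp: is_path_cons)
    moreover have "(y, b) \<in> (Ed d)\<^sup>*" using Cons.IH Cons.prems \<open>is_path T xs y b\<close> by auto
    moreover have "(x, y) \<in> Ed d" using Cons.prems \<open>(x, y) \<in> E\<close> \<open>xs = y # ys\<close> by (auto simp: Ed_def)
    ultimately show ?thesis by (meson converse_rtrancl_into_rtrancl)
  qed
qed

lemma rt_path: "(a, b) \<in> (Ed d)\<^sup>* \<Longrightarrow> a \<noteq> d \<Longrightarrow> \<exists>xs. is_path T xs a b \<and> d \<notin> set xs"
proof (induction rule: converse_rtrancl_induct)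
  case base
  have "is_path T [b] b b" by (simp add: is_path_single)
  then show ?case using base by force
next
  case (step a y)
  then have "y \<noteq> d" "(a, y) \<in> E" by (auto simp: Ed_def)
  then obtain xs where xs: "is_path T xs y b" "d \<notin> set xs" using step by auto
  then obtain ys where "xs = y # ys" unfolding is_path_def by (cases xs) auto
  then show ?case using xs step \<open>(a, y) \<in> E\<close> by (intro exI[of _ "a # xs"]) (auto simp: is_path_cons)
qed

lemma Ed_sub: "Ed d \<subseteq> E" unfolding Ed_def by auto

lemma Ed_from: "(a, b) \<in> (Ed a)\<^sup>* \<Longrightarrow> b = a"
  by (induction rule: rtrancl_induct) (auto simp: Ed_def)

lemma dom_iff:
  assumes "x \<in> N" "x \<noteq> r"
  shows "dominates T d x \<longleftrightarrow> (d, x) \<in> E\<^sup>+ \<and> (r, x) \<notin> (Ed d)\<^sup>*"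
proof -
  have "(\<forall>xs. is_path T xs r x \<longrightarrow> d \<in> set xs) \<longleftrightarrow> (r, x) \<notin> (Ed d)\<^sup>*"
  proof
    assume "\<forall>xs. is_path T xs r x \<longrightarrow> d \<in> set xs"
    show "(r, x) \<notin> (Ed d)\<^sup>*"
    proof
      assume rx: "(r, x) \<in> (Ed d)\<^sup>*"
      show False
      proof (cases "r = d")
        case True then show False using Ed_from rx assms by blast
      next
        case False
        then obtain xs where "is_path T xs r x" "d \<notin> set xs" using rt_path rx by blast
        then show False using \<open>\<forall>xs. is_path T xs r x \<longrightarrow> d \<in> set xs\<close> by blast
      qed
    qed
  next
    assume "(r, x) \<notin> (Ed d)\<^sup>*"
    then show "\<forall>xs. is_path T xs r x \<longrightarrow> d \<in> set xs" using path_rt by blast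
  qed
  then show ?thesis unfolding dominates_def plt_iff by blast
qed

end

context ftl begin

lemma rt_tr: "(a, b) \<in> R\<^sup>* \<Longrightarrow> a \<noteq> b \<Longrightarrow> (a, b) \<in> R\<^sup>+"
  by (simp add: rtrancl_eq_or_trancl)

lemma Ed_avoid_desc: "(a, b) \<in> E\<^sup>* \<Longrightarrow> (d, a) \<in> E\<^sup>+ \<Longrightarrow> (a, b) \<in> (Ed d)\<^sup>*"
proof (induction rule: rtrancl_induct)
  case (step y z)
  have "(d, y) \<in> E\<^sup>+" using step by (meson trancl_rtrancl_trancl)
  moreover have "(d, z) \<in> E\<^sup>+" using calculation step by (meson trancl.trancl_into_trancl)
  ultimately have "(y, z) \<in> Ed d" using step tr_neq unfolding Ed_def by blast
  then show ?case using step by (meson rtrancl.rtrancl_into_rtrancl)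
qed simp

lemma Ed_avoid_anc: "(a, b) \<in> E\<^sup>* \<Longrightarrow> (b, d) \<in> E\<^sup>+ \<Longrightarrow> (a, b) \<in> (Ed d)\<^sup>*"
proof (induction rule: converse_rtrancl_induct)
  case (step y z)
  have "(z, d) \<in> E\<^sup>+" using step by (meson rtrancl_trancl_trancl)
  moreover have "(y, d) \<in> E\<^sup>+" using calculation step by (meson trancl_into_trancl2)
  ultimately have "(y, z) \<in> Ed d" using step tr_neq unfolding Ed_def by blast
  then show ?case using step by (meson converse_rtrancl_into_rtrancl)
qed simp

lemma Ed_avoid_nanc: "(a, b) \<in> E\<^sup>* \<Longrightarrow> (d, b) \<notin> E\<^sup>* \<Longrightarrow> (a, b) \<in> (Ed d)\<^sup>*"
proof (induction rule: converse_rtrancl_induct)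
  case (step y z)
  have "y \<noteq> d" using step by (meson converse_rtrancl_into_rtrancl)
  moreover have "z \<noteq> d" using step by blast
  ultimately have "(y, z) \<in> Ed d" using step unfolding Ed_def by blast
  then show ?case using step by (meson converse_rtrancl_into_rtrancl)
qed simp

lemma Ed_avoid_ndesc: "(a, b) \<in> E\<^sup>* \<Longrightarrow> (a, d) \<notin> E\<^sup>* \<Longrightarrow> (a, b) \<in> (Ed d)\<^sup>*"
proof (induction rule: rtrancl_induct)
  case (step y z)
  have "y \<noteq> d" using step by blast
  moreover have "z \<noteq> d" using step by (meson rtrancl.rtrancl_into_rtrancl)
  ultimately have "(y, z) \<in> Ed d" using step unfolding Ed_def by blast
  then show ?case using step by (meson rtrancl.rtrancl_into_rtrancl)
qed simp

lemma Ed_end: "(a, y) \<in> (Ed d)\<^sup>* \<Longrightarrow> a \<noteq> d \<Longrightarrow> y \<noteq> d"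
  by (induction rule: rtrancl_induct) (auto simp: Ed_def)

lemma Ed_rt: "(a, b) \<in> (Ed d)\<^sup>* \<Longrightarrow> (a, b) \<in> E\<^sup>*"
  using Ed_sub rtrancl_mono by blast

lemma Ed_split: "(a, b) \<in> R\<^sup>* \<Longrightarrow> R \<subseteq> E \<Longrightarrow> a \<noteq> d \<Longrightarrow>
    (a, b) \<in> (Ed d)\<^sup>* \<or> ((a, d) \<in> R\<^sup>* \<and> (d, b) \<in> R\<^sup>*)"
proof (induction rule: rtrancl_induct)
  case (step y z)
  have IH: "(a, y) \<in> (Ed d)\<^sup>* \<or> ((a, d) \<in> R\<^sup>* \<and> (d, y) \<in> R\<^sup>*)" using step.IH step.prems by blast
  from IH show ?case
  proof
    assume ay: "(a, y) \<in> (Ed d)\<^sup>*"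
    then have "y \<noteq> d" using Ed_end step.prems by blast
    show ?thesis
    proof (cases "z = d")
      case True
      have "(a, y) \<in> R\<^sup>*" using step by blast
      then show ?thesis using True step by (meson rtrancl.rtrancl_into_rtrancl rtrancl.rtrancl_refl)
    next
      case False
      then have "(y, z) \<in> Ed d" using step \<open>y \<noteq> d\<close> unfolding Ed_def by blast
      then show ?thesis using ay by (meson rtrancl.rtrancl_into_rtrancl)
    qed
  next
    assume "(a, d) \<in> R\<^sup>* \<and> (d, y) \<in> R\<^sup>*"
    then show ?thesis using step by (meson rtrancl.rtrancl_into_rtrancl)
  qed
qed simp

lemma dom_root: "x \<in> N \<Longrightarrow> x \<noteq> r \<Longrightarrow> dominates T r x"
proof -
  assume x: "x \<in> N" "x \<noteq> r"
  have "(r, x) \<in> E\<^sup>+" using reach[OF x(1)] x(2) rt_tr by metis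
  moreover have "(r, x) \<notin> (Ed r)\<^sup>*" using Ed_from x(2) by blast
  ultimately show ?thesis using dom_iff[OF x] by blast
qed

lemma dom_total:
  assumes x: "x \<in> N" "x \<noteq> r" and d1: "dominates T d1 x" and d2: "dominates T d2 x"
  shows "(d1, d2) \<in> E\<^sup>* \<or> (d2, d1) \<in> E\<^sup>*"
proof (rule ccontr)
  assume nc: "\<not> ((d1, d2) \<in> E\<^sup>* \<or> (d2, d1) \<in> E\<^sup>*)"
  then have nc1: "(d1, d2) \<notin> E\<^sup>*" and nc2: "(d2, d1) \<notin> E\<^sup>*" by simp_all
  have d1': "(d1, x) \<in> E\<^sup>+ \<and> (r, x) \<notin> (Ed d1)\<^sup>*" using d1 unfolding dom_iff[OF x] .
  have d1x: "(d1, x) \<in> E\<^sup>+" "(r, x) \<notin> (Ed d1)\<^sup>*" using d1' by auto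
  have d2': "(d2, x) \<in> E\<^sup>+ \<and> (r, x) \<notin> (Ed d2)\<^sup>*" using d2 unfolding dom_iff[OF x] .
  have d2x: "(d2, x) \<in> E\<^sup>+" using d2' by auto
  have "(d2, x) \<in> (Ed d1)\<^sup>*" by (rule Ed_avoid_ndesc[OF trancl_into_rtrancl[OF d2x] nc2])
  have d2N: "d2 \<in> N" using tN[OF d2x] by blast
  have rd2: "(r, d2) \<in> E\<^sup>*" by (rule reach[OF d2N])
  show False
  proof (cases "d1 = r")
    case True then show False using nc1 rd2 by blast
  next
    case False
    have rd2': "(r, d2) \<in> (Ed d1)\<^sup>*" using Ed_avoid_nanc[OF rd2 nc1] .
    have "(r, x) \<in> (Ed d1)\<^sup>*" by (rule rtrancl_trans[OF rd2' \<open>(d2, x) \<in> (Ed d1)\<^sup>*\<close>])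
    then show False using d1x(2) by simp
  qed
qed

lemma idom_ex:
  assumes x: "x \<in> N" "x \<noteq> r"
  shows "dominates T (idom T x) x \<and> (\<forall>w'. dominates T w' x \<longrightarrow> ple T (idom T x) w')"
proof -
  let ?D = "{d. dominates T d x}"
  have wfc: "wf ((E\<^sup>+)\<inverse>)"
  proof -
    have "wf ((E\<inverse>)\<^sup>+)" using finite_acyclic_wf_converse[OF finE acyc] by (rule wf_trancl)
    then show ?thesis by (simp add: trancl_converse)
  qed
  have "r \<in> ?D" using dom_root[OF x] by simp
  then obtain d0 where d0: "d0 \<in> ?D" "\<And>y. (y, d0) \<in> (E\<^sup>+)\<inverse> \<Longrightarrow> y \<notin> ?D"
    using wfc[unfolded wf_eq_minimal, rule_format, OF \<open>r \<in> ?D\<close>] by blast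
  have least: "ple T d0 w'" if "dominates T w' x" for w'
  proof -
    have "(d0, w') \<in> E\<^sup>* \<or> (w', d0) \<in> E\<^sup>*" using dom_total x d0(1) that by blast
    then show ?thesis
    proof
      assume "(d0, w') \<in> E\<^sup>*"
      then have "d0 = w' \<or> (d0, w') \<in> E\<^sup>+" using rt_tr by metis
      then show ?thesis using d0(2)[of w'] that unfolding ple_iff by auto
    qed (simp add: ple_iff)
  qed
  have "\<exists>!d. dominates T d x \<and> (\<forall>w'. dominates T w' x \<longrightarrow> ple T d w')"
  proof (rule ex1I[of _ d0])
    show "dominates T d0 x \<and> (\<forall>w'. dominates T w' x \<longrightarrow> ple T d0 w')" using d0 least by blast
    fix d assume "dominates T d x \<and> (\<forall>w'. dominates T w' x \<longrightarrow> ple T d w')"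
    then show "d = d0" using least d0(1) antisym unfolding ple_iff by blast
  qed
  then show ?thesis unfolding idom_def by (rule theI')
qed

lemma idom_dom: "x \<in> N \<Longrightarrow> x \<noteq> r \<Longrightarrow> dominates T (idom T x) x"
  using idom_ex by blast

lemma idom_least: "x \<in> N \<Longrightarrow> x \<noteq> r \<Longrightarrow> dominates T d x \<Longrightarrow> (d, idom T x) \<in> E\<^sup>*"
  using idom_ex unfolding ple_iff by blast

lemma idom_props: assumes "x \<in> N" "x \<noteq> r"
  shows "(idom T x, x) \<in> E\<^sup>+ \<and> (r, x) \<notin> (Ed (idom T x))\<^sup>*"
  using idom_dom[OF assms] unfolding dom_iff[OF assms] .

lemma idom_lt: "x \<in> N \<Longrightarrow> x \<noteq> r \<Longrightarrow> (idom T x, x) \<in> E\<^sup>+"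
  using idom_props by blast

lemma idom_avoid: "x \<in> N \<Longrightarrow> x \<noteq> r \<Longrightarrow> (r, x) \<notin> (Ed (idom T x))\<^sup>*"
  using idom_props by blast

end

lemma fails_mono: "fails T' A C x \<Longrightarrow> A \<subseteq> A' \<Longrightarrow> fails T' A' C x"
  by (induction rule: fails.induct) (auto intro: fails.intros)

lemma fails_BEs: "fails T' A C x \<Longrightarrow> fails T' (A \<inter> BEs T') C x"
  by (induction rule: fails.induct) (auto intro: fails.intros simp: BEs_def)

lemma fails_BEs_iff: "fails T' A C x \<longleftrightarrow> fails T' (A \<inter> BEs T') C x"
  using fails_BEs fails_mono[OF _ Int_lower1] by (rule iffI)

context ftl begin

definition Ecut :: "'v set \<Rightarrow> ('v \<times> 'v) set" where
  "Ecut I = {(a, b) \<in> E. a \<notin> I}"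

definition gc :: "'v set \<Rightarrow> 'v ft" where
  "gc I = T\<lparr>edges := Ecut I, gam := (\<lambda>x. if x \<in> I then CBE else gam T x)\<rparr>"

definition Fg :: "'v set \<Rightarrow> 'v set \<Rightarrow> 'v set \<Rightarrow> 'v \<Rightarrow> bool" where
  "Fg I A C x = fails (gc I) A C x"

definition TC :: "'v \<Rightarrow> 'v set \<Rightarrow> 'v ft" where
  "TC v I = restrict_cut (subtree T v) I"

definition Reach :: "'v \<Rightarrow> 'v set \<Rightarrow> 'v set" where
  "Reach v I = {x. (v, x) \<in> (Ecut I)\<^sup>*}"

lemma Ecut_sub: "Ecut I \<subseteq> E" unfolding Ecut_def by auto

lemma Ecut_rt: "(a, b) \<in> (Ecut I)\<^sup>* \<Longrightarrow> (a, b) \<in> E\<^sup>*"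
  using Ecut_sub rtrancl_mono by blast

lemma Reach_N: "v \<in> N \<Longrightarrow> Reach v I \<subseteq> N"
  unfolding Reach_def using Ecut_rt rtN by blast

lemma TC_nodes: "nodes (TC v I) = Reach v I"
proof -
  define D where "D = {w. (v, w) \<in> E\<^sup>*}"
  define E' where "E' = {(a, b) \<in> {(a, b) \<in> E. a \<in> D}. a \<notin> I}"
  have "nodes (TC v I) = {w. (v, w) \<in> E'\<^sup>*}"
    unfolding TC_def restrict_cut_def subtree_def E'_def D_def Let_def by simp
  moreover have "(v, w) \<in> E'\<^sup>* \<longleftrightarrow> (v, w) \<in> (Ecut I)\<^sup>*" for w
  proof
    assume "(v, w) \<in> E'\<^sup>*"
    moreover have "E' \<subseteq> Ecut I" unfolding E'_def Ecut_def by auto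
    ultimately show "(v, w) \<in> (Ecut I)\<^sup>*" using rtrancl_mono by blast
  next
    assume "(v, w) \<in> (Ecut I)\<^sup>*"
    then show "(v, w) \<in> E'\<^sup>*"
    proof (induction rule: rtrancl_induct)
      case (step y z)
      have "(v, y) \<in> E\<^sup>*" using step Ecut_rt by blast
      then have "(y, z) \<in> E'" using step unfolding E'_def D_def Ecut_def by auto
      then show ?case using step by (meson rtrancl.rtrancl_into_rtrancl)
    qed simp
  qed
  ultimately show ?thesis unfolding Reach_def by blast
qed

lemma TC_edges: "edges (TC v I) = {(a, b) \<in> Ecut I. a \<in> Reach v I}"
proof -
  have "edges (TC v I) = {(a, b) \<in> E. (v, a) \<in> E\<^sup>* \<and> a \<notin> I \<and> a \<in> nodes (TC v I)}"
    unfolding TC_def restrict_cut_def subtree_def Let_def by auto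
  also have "\<dots> = {(a, b) \<in> Ecut I. a \<in> Reach v I}"
    unfolding TC_nodes Reach_def Ecut_def using Ecut_rt unfolding Ecut_def by blast
  finally show ?thesis .
qed

lemma TC_root: "root (TC v I) = v"
  unfolding TC_def restrict_cut_def subtree_def Let_def by simp

lemma TC_gam: "gam (TC v I) = (\<lambda>x. if x \<in> I then CBE else gam T x)"
  unfolding TC_def restrict_cut_def subtree_def Let_def by (rule ext) simp

lemma TC_prob: "prob (TC v I) = prob T"
  unfolding TC_def restrict_cut_def subtree_def Let_def by simp

lemma Reach_step: "x \<in> Reach v I \<Longrightarrow> (x, y) \<in> Ecut I \<Longrightarrow> y \<in> Reach v I"
  unfolding Reach_def by (simp add: rtrancl.rtrancl_into_rtrancl)

lemma gc_simps: "nodes (gc I) = N" "edges (gc I) = Ecut I" "gam (gc I) = (\<lambda>x. if x \<in> I then CBE else gam T x)"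
  unfolding gc_def by simp_all

lemma fails_TC1: "fails (TC v I) A C x \<Longrightarrow> v \<in> N \<Longrightarrow> Fg I A C x"
  unfolding Fg_def
proof (induction rule: fails.induct)
  case (fails_BE x)
  then have "x \<in> N" using Reach_N[of v I] by (auto simp: TC_nodes)
  then show ?case using fails_BE by (auto intro!: fails.fails_BE simp: TC_gam gc_simps)
next
  case (fails_CBE x)
  then have "x \<in> N" using Reach_N[of v I] by (auto simp: TC_nodes)
  then show ?case using fails_CBE by (auto intro!: fails.fails_CBE simp: TC_gam gc_simps)
next
  case (fails_OR x w)
  then have "x \<in> N" using Reach_N[of v I] by (auto simp: TC_nodes)
  show ?case
    by (rule fails.fails_OR[where w=w]) (use fails_OR \<open>x \<in> N\<close> in \<open>auto simp: TC_gam TC_edges gc_simps\<close>)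
next
  case (fails_AND x)
  then have "x \<in> N" using Reach_N[of v I] by (auto simp: TC_nodes)
  show ?case
    by (rule fails.fails_AND) (use fails_AND \<open>x \<in> N\<close> in \<open>auto simp: TC_gam TC_edges TC_nodes gc_simps\<close>)
qed

lemma fails_TC2: "fails (gc I) A C x \<Longrightarrow> v \<in> N \<Longrightarrow> x \<in> Reach v I \<Longrightarrow> fails (TC v I) A C x"
proof (induction rule: fails.induct)
  case (fails_BE x)
  then show ?case by (auto intro!: fails.fails_BE simp: TC_nodes TC_gam gc_simps)
next
  case (fails_CBE x)
  then show ?case by (auto intro!: fails.fails_CBE simp: TC_nodes TC_gam gc_simps)
next
  case (fails_OR x w)
  have "w \<in> Reach v I" using fails_OR Reach_step by (auto simp: gc_simps)
  show ?case
    by (rule fails.fails_OR[where w=w]) (use fails_OR \<open>w \<in> Reach v I\<close> in \<open>auto simp: TC_gam TC_edges TC_nodes gc_simps\<close>)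
next
  case (fails_AND x)
  have "\<And>y. (x, y) \<in> Ecut I \<Longrightarrow> y \<in> Reach v I" using fails_AND Reach_step by blast
  then show ?case
    by (intro fails.fails_AND) (use fails_AND in \<open>auto simp: TC_gam TC_edges TC_nodes gc_simps\<close>)
qed

lemma fails_TC: "v \<in> N \<Longrightarrow> x \<in> Reach v I \<Longrightarrow> fails (TC v I) A C x \<longleftrightarrow> Fg I A C x"
  using fails_TC1 fails_TC2 unfolding Fg_def by blast

lemma v_Reach: "v \<in> Reach v I" unfolding Reach_def by simp

lemma BEs_TC: "BEs (TC v I) = {x \<in> Reach v I. x \<notin> I \<and> gam T x = BE}"
  unfolding BEs_def TC_nodes TC_gam by auto

lemma CBEs_TC: "v \<in> N \<Longrightarrow> CBEs (TC v I) = Reach v I \<inter> I"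
  unfolding CBEs_def TC_nodes TC_gam using Reach_N noCBE by auto

lemma finite_Reach: "v \<in> N \<Longrightarrow> finite (Reach v I)"
  using Reach_N finN finite_subset by blast

end

context ftl begin

lemma Fg_cong: "fails (gc I1) A C x \<Longrightarrow> (\<forall>y. (x, y) \<in> E\<^sup>* \<longrightarrow> (y \<in> I1 \<longleftrightarrow> y \<in> I2)) \<Longrightarrow> fails (gc I2) A C x"
proof (induction rule: fails.induct)
  case (fails_BE x)
  then have "x \<notin> I2" by (auto simp: gc_simps split: if_splits)
  then show ?case using fails_BE by (auto intro!: fails.fails_BE simp: gc_simps split: if_splits)
next
  case (fails_CBE x)
  then show ?case by (auto intro!: fails.fails_CBE simp: gc_simps split: if_splits)
next
  case (fails_OR x w)
  have xI: "x \<notin> I1" "x \<notin> I2" using fails_OR by (auto simp: gc_simps split: if_splits)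
  have "(x, w) \<in> E" using fails_OR by (auto simp: gc_simps Ecut_def)
  then have "\<forall>y. (w, y) \<in> E\<^sup>* \<longrightarrow> (y \<in> I1 \<longleftrightarrow> y \<in> I2)" using fails_OR.prems
    by (meson converse_rtrancl_into_rtrancl)
  then have "fails (gc I2) A C w" using fails_OR.IH by blast
  show ?case
    by (rule fails.fails_OR[where w=w]) (use fails_OR xI \<open>(x, w) \<in> E\<close> \<open>fails (gc I2) A C w\<close> in \<open>auto simp: gc_simps Ecut_def\<close>)
next
  case (fails_AND x)
  have xI: "x \<notin> I1" "x \<notin> I2" using fails_AND by (auto simp: gc_simps split: if_splits)
  have "fails (gc I2) A C w" if "(x, w) \<in> Ecut I2" for w
  proof -
    have "(x, w) \<in> E" using that by (auto simp: Ecut_def)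
    then have "\<forall>y. (w, y) \<in> E\<^sup>* \<longrightarrow> (y \<in> I1 \<longleftrightarrow> y \<in> I2)" using fails_AND.prems
      by (meson converse_rtrancl_into_rtrancl)
    moreover have "(x, w) \<in> edges (gc I1)" using \<open>(x, w) \<in> E\<close> xI by (auto simp: gc_simps Ecut_def)
    ultimately show ?thesis using fails_AND.IH by blast
  qed
  then show ?case
    by (intro fails.fails_AND) (use fails_AND xI in \<open>auto simp: gc_simps\<close>)
qed

lemma Fg_subst1:
  assumes w: "w \<in> J"
  shows "fails (gc (J - {w})) A C x \<Longrightarrow> fails (gc J) A (if fails (gc (J - {w})) A C w then insert w C else C - {w}) x"
proof (induction rule: fails.induct)
  case (fails_BE x)
  show ?case
  proof (cases "x = w")
    case True
    have "fails (gc (J - {w})) A C x" by (rule fails.fails_BE) (use fails_BE in auto)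
    then have "fails (gc (J - {w})) A C w" using True by simp
    then show ?thesis using True w fails_BE by (auto intro!: fails.fails_CBE simp: gc_simps)
  next
    case False
    then show ?thesis using fails_BE by (auto intro!: fails.fails_BE simp: gc_simps split: if_splits)
  qed
next
  case (fails_CBE x)
  show ?case
  proof (cases "x = w")
    case True
    have "fails (gc (J - {w})) A C x" by (rule fails.fails_CBE) (use fails_CBE in auto)
    then have "fails (gc (J - {w})) A C w" using True by simp
    then show ?thesis using True w fails_CBE by (auto intro!: fails.fails_CBE simp: gc_simps)
  next
    case False
    then show ?thesis using fails_CBE by (auto intro!: fails.fails_CBE simp: gc_simps split: if_splits)
  qed
next
  case (fails_OR x y)
  show ?case
  proof (cases "x = w")
    case True
    have "fails (gc (J - {w})) A C x" by (rule fails.fails_OR[where w=y]) (use fails_OR in auto)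
    then have "fails (gc (J - {w})) A C w" using True by simp
    then show ?thesis using True w fails_OR by (auto intro!: fails.fails_CBE simp: gc_simps)
  next
    case False
    show ?thesis
      by (rule fails.fails_OR[where w=y]) (use fails_OR False in \<open>auto simp: gc_simps Ecut_def split: if_splits\<close>)
  qed
next
  case (fails_AND x)
  show ?case
  proof (cases "x = w")
    case True
    have "fails (gc (J - {w})) A C x" by (rule fails.fails_AND) (use fails_AND in auto)
    then have "fails (gc (J - {w})) A C w" using True by simp
    then show ?thesis using True w fails_AND by (auto intro!: fails.fails_CBE simp: gc_simps)
  next
    case False
    show ?thesis
      by (rule fails.fails_AND) (use fails_AND False in \<open>auto simp: gc_simps Ecut_def split: if_splits\<close>)
  qed
qed

lemma Fg_subst2:
  assumes w: "w \<in> J"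
  shows "fails (gc J) A C' x \<Longrightarrow> C' = (if fails (gc (J - {w})) A C w then insert w C else C - {w}) \<Longrightarrow> fails (gc (J - {w})) A C x"
proof (induction rule: fails.induct)
  case (fails_BE x)
  then show ?case using w by (auto intro!: fails.fails_BE simp: gc_simps split: if_splits)
next
  case (fails_CBE x)
  show ?case
  proof (cases "x = w")
    case True
    then show ?thesis using fails_CBE by (auto split: if_splits)
  next
    case False
    then show ?thesis using fails_CBE by (auto intro!: fails.fails_CBE simp: gc_simps split: if_splits)
  qed
next
  case (fails_OR x y)
  have "x \<notin> J" "x \<noteq> w" using fails_OR w by (auto simp: gc_simps split: if_splits)
  show ?case
    by (rule fails.fails_OR[where w=y]) (use fails_OR \<open>x \<notin> J\<close> in \<open>auto simp: gc_simps Ecut_def split: if_splits\<close>)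
next
  case (fails_AND x)
  have "x \<notin> J" "x \<noteq> w" using fails_AND w by (auto simp: gc_simps split: if_splits)
  show ?case
    by (rule fails.fails_AND) (use fails_AND \<open>x \<notin> J\<close> in \<open>auto simp: gc_simps Ecut_def split: if_splits\<close>)
qed

lemma Fg_subst:
  assumes w: "w \<in> J"
  shows "fails (gc (J - {w})) A C x \<longleftrightarrow> fails (gc J) A (if fails (gc (J - {w})) A C w then insert w C else C - {w}) x"
  using Fg_subst1[OF w] Fg_subst2[OF w] by blast

end

definition wt :: "('v \<Rightarrow> real) \<Rightarrow> 'v set \<Rightarrow> 'v set \<Rightarrow> real" where
  "wt p B A = (\<Prod>x\<in>A. p x) * (\<Prod>x\<in>B - A. 1 - p x)"

lemma wt_sum1: "finite B \<Longrightarrow> (\<Sum>A\<in>Pow B. wt p B A) = 1"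
  unfolding wt_def using prod_add[of B p "\<lambda>x. 1 - p x"] by simp

lemma Pow_split_sum:
  assumes "finite X" "finite Y" "X \<inter> Y = {}"
  shows "(\<Sum>A\<in>Pow (X \<union> Y). h A) = (\<Sum>A1\<in>Pow X. \<Sum>A2\<in>Pow Y. h (A1 \<union> A2))"
proof -
  have "(\<Sum>A1\<in>Pow X. \<Sum>A2\<in>Pow Y. h (A1 \<union> A2)) = (\<Sum>(A1, A2)\<in>Pow X \<times> Pow Y. h (A1 \<union> A2))"
    by (rule sum.cartesian_product)
  also have "\<dots> = (\<Sum>A\<in>Pow (X \<union> Y). h A)"
    by (rule sum.reindex_bij_witness[of _ "\<lambda>A. (A \<inter> X, A \<inter> Y)" "\<lambda>(a, b). a \<union> b"]) (use assms in auto)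
  finally show ?thesis by simp
qed

lemma wt_union:
  assumes "finite X" "finite Y" "X \<inter> Y = {}" "A1 \<subseteq> X" "A2 \<subseteq> Y"
  shows "wt p (X \<union> Y) (A1 \<union> A2) = wt p X A1 * wt p Y A2"
proof -
  have f: "finite A1" "finite A2" using assms(1,2,4,5) finite_subset by blast+
  have "(X \<union> Y) - (A1 \<union> A2) = (X - A1) \<union> (Y - A2)" using assms by auto
  moreover have "(\<Prod>x\<in>A1 \<union> A2. p x) = (\<Prod>x\<in>A1. p x) * (\<Prod>x\<in>A2. p x)"
    by (rule prod.union_disjoint) (use assms f in auto)
  moreover have "(\<Prod>x\<in>(X - A1) \<union> (Y - A2). 1 - p x) = (\<Prod>x\<in>X - A1. 1 - p x) * (\<Prod>x\<in>Y - A2. 1 - p x)"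
    by (rule prod.union_disjoint) (use assms in auto)
  ultimately show ?thesis unfolding wt_def by (simp add: ac_simps)
qed

lemma marg:
  assumes B: "finite B" and B0: "B0 \<subseteq> B" and f: "\<And>A. A \<subseteq> B \<Longrightarrow> f A = f (A \<inter> B0)"
  shows "(\<Sum>A\<in>Pow B. wt p B A * f A) = (\<Sum>A0\<in>Pow B0. wt p B0 A0 * f A0)"
proof -
  have fB0: "finite B0" "finite (B - B0)" using B B0 finite_subset by auto
  have BB: "B = B0 \<union> (B - B0)" using B0 by auto
  have "(\<Sum>A\<in>Pow (B0 \<union> (B - B0)). wt p B A * f A) = (\<Sum>A0\<in>Pow B0. \<Sum>A1\<in>Pow (B - B0). wt p B (A0 \<union> A1) * f (A0 \<union> A1))"
    by (rule Pow_split_sum) (use fB0 in auto)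
  then have "(\<Sum>A\<in>Pow B. wt p B A * f A) = (\<Sum>A0\<in>Pow B0. \<Sum>A1\<in>Pow (B - B0). wt p (B0 \<union> (B - B0)) (A0 \<union> A1) * f (A0 \<union> A1))"
    using BB by simp
  also have "\<dots> = (\<Sum>A0\<in>Pow B0. \<Sum>A1\<in>Pow (B - B0). wt p B0 A0 * f A0 * wt p (B - B0) A1)"
  proof (intro sum.cong refl)
    fix A0 A1 assume a: "A0 \<in> Pow B0" "A1 \<in> Pow (B - B0)"
    have "A0 \<union> A1 \<subseteq> B" using a B0 by auto
    then have "f (A0 \<union> A1) = f ((A0 \<union> A1) \<inter> B0)" by (rule f)
    also have "(A0 \<union> A1) \<inter> B0 = A0" using a by auto
    finally show "wt p (B0 \<union> (B - B0)) (A0 \<union> A1) * f (A0 \<union> A1) = wt p B0 A0 * f A0 * wt p (B - B0) A1"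
      using wt_union[of B0 "B - B0" A0 A1 p] fB0 a by auto
  qed
  also have "\<dots> = (\<Sum>A0\<in>Pow B0. wt p B0 A0 * f A0)"
    by (simp add: sum_distrib_left[symmetric] wt_sum1[OF fB0(2)])
  finally show ?thesis .
qed

context ftl begin

lemma ToDo_iff: "x \<in> ToDo_v T v \<longleftrightarrow> x \<in> N \<and> x \<noteq> r \<and> idom T x = v"
  unfolding ToDo_v_def by auto

lemma Iset_iff: "x \<in> Iset T v \<longleftrightarrow> x \<in> N \<and> (v, x) \<in> E\<^sup>+ \<and> (idom T x, v) \<in> E\<^sup>+"
  unfolding Iset_def plt_iff by auto

lemma not_r: "(a, x) \<in> E\<^sup>+ \<Longrightarrow> x \<noteq> r"
  using reach tN tr_asym by blast

lemma EcutEd: "(a, b) \<in> (Ecut J)\<^sup>* \<Longrightarrow> w \<in> J \<Longrightarrow> a \<noteq> w \<Longrightarrow> b \<noteq> w \<Longrightarrow> (a, b) \<in> (Ed w)\<^sup>*"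
proof (induction rule: rtrancl_induct)
  case (step y z)
  then have "y \<notin> J" by (auto simp: Ecut_def)
  then have "y \<noteq> w" using step by auto
  then have "(a, y) \<in> (Ed w)\<^sup>*" using step by blast
  moreover have "(y, z) \<in> Ed w" using step \<open>y \<noteq> w\<close> by (auto simp: Ecut_def Ed_def)
  ultimately show ?case by (meson rtrancl.rtrancl_into_rtrancl)
qed simp

lemma Reach_cong_sub: "(\<forall>y. (a, y) \<in> E\<^sup>* \<longrightarrow> (y \<in> K1 \<longleftrightarrow> y \<in> K2)) \<Longrightarrow> Reach a K1 \<subseteq> Reach a K2"
proof
  fix x assume ag: "\<forall>y. (a, y) \<in> E\<^sup>* \<longrightarrow> (y \<in> K1 \<longleftrightarrow> y \<in> K2)" and "x \<in> Reach a K1"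
  then have "(a, x) \<in> (Ecut K1)\<^sup>*" unfolding Reach_def by simp
  then have "(a, x) \<in> (Ecut K2)\<^sup>*"
  proof (induction rule: rtrancl_induct)
    case (step y z)
    have "(a, y) \<in> E\<^sup>*" using step Ecut_rt by blast
    then have "(y, z) \<in> Ecut K2" using step ag by (auto simp: Ecut_def)
    then show ?case using step by (meson rtrancl.rtrancl_into_rtrancl)
  qed simp
  then show "x \<in> Reach a K2" unfolding Reach_def by simp
qed

lemma Reach_cong: "(\<forall>y. (a, y) \<in> E\<^sup>* \<longrightarrow> (y \<in> K1 \<longleftrightarrow> y \<in> K2)) \<Longrightarrow> Reach a K1 = Reach a K2"
  using Reach_cong_sub[of a K1 K2] Reach_cong_sub[of a K2 K1] by blast

lemma Reach_mono: "K1 \<subseteq> K2 \<Longrightarrow> Reach a K2 \<subseteq> Reach a K1"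
proof -
  assume "K1 \<subseteq> K2"
  then have "Ecut K2 \<subseteq> Ecut K1" unfolding Ecut_def by auto
  then show ?thesis unfolding Reach_def using rtrancl_mono by blast
qed

lemma Reach_trans: "x \<in> Reach a K \<Longrightarrow> y \<in> Reach x K \<Longrightarrow> y \<in> Reach a K"
  unfolding Reach_def by (meson mem_Collect_eq rtrancl_trans)

lemma Reach_E: "x \<in> Reach a K \<Longrightarrow> (a, x) \<in> E\<^sup>*"
  unfolding Reach_def using Ecut_rt by blast

end

locale stepctx = ftl +
  fixes v S w
  assumes vN: "v \<in> N"
    and Ssub: "S \<subseteq> ToDo_v T v"
    and Sdown: "\<forall>x\<in>ToDo_v T v. \<forall>u\<in>S. (u, x) \<in> E\<^sup>+ \<longrightarrow> x \<in> S"
    and wS: "w \<in> S"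
    and wmax: "\<forall>u\<in>S. (u, w) \<notin> E\<^sup>+"
begin

abbreviation "J \<equiv> Iset T v \<union> S"
abbreviation "Iw \<equiv> Iset T w"

lemma w_props: "w \<in> N" "w \<noteq> r" "idom T w = v"
  using wS Ssub by (auto simp: ToDo_iff)

lemma vw: "(v, w) \<in> E\<^sup>+"
  using idom_lt w_props by metis

lemma w_avoid: "(r, w) \<notin> (Ed v)\<^sup>*"
  using idom_avoid w_props by metis

lemma v_notJ: "v \<notin> J"
proof
  assume "v \<in> J"
  then show False
  proof
    assume "v \<in> Iset T v" then show False using irr by (auto simp: Iset_iff)
  next
    assume "v \<in> S"
    then have "v \<in> N" "v \<noteq> r" "idom T v = v" using Ssub by (auto simp: ToDo_iff)
    then show False using idom_lt irr by metis
  qed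
qed

lemma wJ: "w \<in> J" using wS by simp

lemma G1: "(w, x) \<in> E\<^sup>* \<Longrightarrow> x \<in> Iw \<longleftrightarrow> x \<in> J - {w}"
proof (cases "x = w")
  case True
  then show ?thesis using irr by (auto simp: Iset_iff)
next
  case False
  assume wx: "(w, x) \<in> E\<^sup>*"
  then have wx': "(w, x) \<in> E\<^sup>+" using False rt_tr by metis
  have xN: "x \<in> N" using tN[OF wx'] by blast
  have xr: "x \<noteq> r" using not_r[OF wx'] .
  have vx: "(v, x) \<in> E\<^sup>+" using vw wx' by (meson trancl_trans)
  show ?thesis
  proof
    assume "x \<in> Iw"
    then have dw: "(idom T x, w) \<in> E\<^sup>+" by (simp add: Iset_iff)
    have "(r, w) \<notin> (Ed (idom T x))\<^sup>*"
    proof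
      assume "(r, w) \<in> (Ed (idom T x))\<^sup>*"
      moreover have "(w, x) \<in> (Ed (idom T x))\<^sup>*" using Ed_avoid_desc[OF wx dw] .
      ultimately have "(r, x) \<in> (Ed (idom T x))\<^sup>*" by (rule rtrancl_trans)
      then show False using idom_avoid[OF xN xr] by blast
    qed
    then have "dominates T (idom T x) w" using dom_iff[OF w_props(1,2)] dw by blast
    then have "(idom T x, v) \<in> E\<^sup>*" using idom_least[OF w_props(1,2)] w_props(3) by metis
    then have "idom T x = v \<or> (idom T x, v) \<in> E\<^sup>+" using rt_tr by metis
    then show "x \<in> J - {w}"
    proof
      assume "idom T x = v"
      then have "x \<in> ToDo_v T v" using xN xr by (simp add: ToDo_iff)
      then have "x \<in> S" using Sdown wS wx' by blast
      then show ?thesis using False by simp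
    next
      assume "(idom T x, v) \<in> E\<^sup>+"
      then show ?thesis using xN vx False by (simp add: Iset_iff)
    qed
  next
    assume "x \<in> J - {w}"
    then have "x \<in> Iset T v \<or> x \<in> S" by simp
    then have "(idom T x, w) \<in> E\<^sup>+"
    proof
      assume "x \<in> Iset T v"
      then have "(idom T x, v) \<in> E\<^sup>+" by (simp add: Iset_iff)
      then show ?thesis using vw by (meson trancl_trans)
    next
      assume "x \<in> S"
      then have "idom T x = v" using Ssub by (auto simp: ToDo_iff)
      then show ?thesis using vw by simp
    qed
    then show "x \<in> Iw" using xN wx' by (simp add: Iset_iff)
  qed
qed

lemma G2_aux: "(v, y) \<in> E\<^sup>* \<Longrightarrow> (y, w) \<in> E\<^sup>+ \<Longrightarrow> y \<notin> J"
proof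
  assume vy: "(v, y) \<in> E\<^sup>*" and yw: "(y, w) \<in> E\<^sup>+" and yJ: "y \<in> J"
  have "y \<noteq> v" using yJ v_notJ by blast
  then have vy': "(v, y) \<in> E\<^sup>+" using vy rt_tr by metis
  from yJ show False
  proof
    assume "y \<in> S" then show False using wmax yw by blast
  next
    assume yI: "y \<in> Iset T v"
    then have yN: "y \<in> N" and dv: "(idom T y, v) \<in> E\<^sup>+" by (auto simp: Iset_iff)
    have yr: "y \<noteq> r" using not_r[OF vy'] .
    have "\<not> dominates T v y"
    proof
      assume "dominates T v y"
      then have "(v, idom T y) \<in> E\<^sup>*" using idom_least[OF yN yr] by blast
      then show False using dv tr_asym by blast
    qed
    then have "(r, y) \<in> (Ed v)\<^sup>*" using dom_iff[OF yN yr] vy' by blast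
    moreover have "(y, w) \<in> (Ed v)\<^sup>*" using Ed_avoid_desc[OF trancl_into_rtrancl[OF yw] vy'] .
    ultimately have "(r, w) \<in> (Ed v)\<^sup>*" by (rule rtrancl_trans)
    then show False using w_avoid by blast
  qed
qed

lemma G2: "w \<in> Reach v J"
proof -
  have "(v, y) \<in> E\<^sup>* \<Longrightarrow> (y, w) \<in> E\<^sup>* \<Longrightarrow> (v, y) \<in> (Ecut J)\<^sup>*" for y
  proof (induction rule: rtrancl_induct)
    case (step y z)
    have "(y, w) \<in> E\<^sup>+" using step by (meson rtrancl_into_trancl2)
    then have "y \<notin> J" using G2_aux step by blast
    then have "(y, z) \<in> Ecut J" using step by (simp add: Ecut_def)
    moreover have "(y, w) \<in> E\<^sup>*" using \<open>(y, w) \<in> E\<^sup>+\<close> by simp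
    ultimately show ?case using step by (meson rtrancl.rtrancl_into_rtrancl)
  qed simp
  then show ?thesis unfolding Reach_def using vw by (meson mem_Collect_eq rtrancl_refl trancl_into_rtrancl)
qed

lemma claimD: "(w, y) \<in> (Ecut Iw)\<^sup>* \<Longrightarrow> y \<notin> Iw \<Longrightarrow> y \<noteq> w \<Longrightarrow> (r, y) \<notin> (Ed w)\<^sup>*"
proof (induction y rule: wf_induct_rule[OF wf_trancl[OF wfE]])
  case (1 y)
  have wy: "(w, y) \<in> E\<^sup>+" using 1 Ecut_rt rt_tr by metis
  have yN: "y \<in> N" using tN[OF wy] by blast
  have yr: "y \<noteq> r" using not_r[OF wy] .
  define d where "d = idom T y"
  have dy: "(d, y) \<in> E\<^sup>+" "(r, y) \<notin> (Ed d)\<^sup>*" using idom_props[OF yN yr] unfolding d_def by auto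
  have ndw: "(d, w) \<notin> E\<^sup>+" using 1(3) wy yN unfolding d_def by (auto simp: Iset_iff)
  show ?case
  proof
    assume ry: "(r, y) \<in> (Ed w)\<^sup>*"
    have dnw: "d \<noteq> w" using ry dy(2) by blast
    then have ndw': "(d, w) \<notin> E\<^sup>*" using ndw rt_tr by metis
    have "(w, y) \<notin> (Ed d)\<^sup>*"
    proof
      assume "(w, y) \<in> (Ed d)\<^sup>*"
      moreover have "(r, w) \<in> (Ed d)\<^sup>*" using Ed_avoid_nanc[OF reach[OF w_props(1)] ndw'] .
      ultimately show False using dy(2) by (meson rtrancl_trans)
    qed
    then have "(w, d) \<in> (Ecut Iw)\<^sup>*" "(d, y) \<in> (Ecut Iw)\<^sup>*"
      using Ed_split[OF 1(2) Ecut_sub, of d] dnw by auto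
    then have "(d, y) \<in> (Ecut Iw)\<^sup>+" using tr_neq[OF dy(1)] rt_tr by metis
    then obtain z where "(d, z) \<in> Ecut Iw" by (meson converse_tranclE)
    then have dI: "d \<notin> Iw" by (simp add: Ecut_def)
    have rd: "(r, d) \<notin> (Ed w)\<^sup>*" using 1(1)[OF dy(1) \<open>(w, d) \<in> (Ecut Iw)\<^sup>*\<close> dI dnw] .
    show False
    proof (cases "r = d")
      case True then show False using rd by simp
    next
      case False
      from Ed_split[OF ry Ed_sub False] show False using dy(2) rd by blast
    qed
  qed
qed

lemma G3: "x \<in> Reach w Iw \<Longrightarrow> x \<notin> Iw \<Longrightarrow> x \<noteq> w \<Longrightarrow> x \<notin> Reach v J"
proof
  assume x: "x \<in> Reach w Iw" "x \<notin> Iw" "x \<noteq> w" and xv: "x \<in> Reach v J"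
  have "(r, x) \<notin> (Ed w)\<^sup>*" using claimD x unfolding Reach_def by blast
  moreover have "(v, x) \<in> (Ed w)\<^sup>*"
    using EcutEd[of v x J w] xv wJ x(3) tr_neq[OF vw] unfolding Reach_def by blast
  moreover have "(r, v) \<in> (Ed w)\<^sup>*" using Ed_avoid_anc[OF reach[OF vN] vw] .
  ultimately show False by (meson rtrancl_trans)
qed

lemma Reach_w: "Reach w Iw = Reach w (J - {w})"
  by (rule Reach_cong) (use G1 in blast)

lemma R3: "x \<in> Reach v (J - {w}) \<Longrightarrow> x \<in> Reach v J \<or> x \<in> Reach w (J - {w})"
proof -
  assume "x \<in> Reach v (J - {w})"
  then have "(v, x) \<in> (Ecut (J - {w}))\<^sup>*" by (simp add: Reach_def)
  then show ?thesis
  proof (induction rule: rtrancl_induct)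
    case base then show ?case by (simp add: Reach_def)
  next
    case (step y z)
    from step.IH show ?case
    proof
      assume yv: "y \<in> Reach v J"
      show ?thesis
      proof (cases "y = w")
        case True
        then have "(w, z) \<in> (Ecut (J - {w}))\<^sup>*" using step by blast
        then show ?thesis by (simp add: Reach_def)
      next
        case False
        then have "(y, z) \<in> Ecut J" using step by (auto simp: Ecut_def)
        then show ?thesis using yv Reach_step by blast
      qed
    next
      assume "y \<in> Reach w (J - {w})"
      then show ?thesis using step Reach_step by blast
    qed
  qed
qed

lemma R1: "Reach v J \<subseteq> Reach v (J - {w})"
  by (rule Reach_mono) blast

lemma R4: "Reach w (J - {w}) \<subseteq> Reach v (J - {w})"
  using G2 R1 Reach_trans by blast

end

lemma unrel_wt: "unrel T' C = (\<Sum>A\<in>Pow (BEs T'). wt (prob T') (BEs T') A * (if fails T' A C (root T') then 1 else 0))"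
  unfolding unrel_def wt_def by simp

context ftl begin

definition good :: "'v \<Rightarrow> 'v set \<Rightarrow> 'v sfpoly \<Rightarrow> bool" where
  "good x K h \<longleftrightarrow> inA (CBEs (TC x K)) h \<and> (\<forall>C. peval N h C = unrel (TC x K) C)"

end

context stepctx begin

abbreviation "T1 \<equiv> TC v (J - {w})"
abbreviation "T2 \<equiv> TC v J"
abbreviation "T3 \<equiv> TC w Iw"

lemma fails_link: "fails T1 A C v \<longleftrightarrow> fails T2 A (if fails T3 A C w then insert w C else C - {w}) v"
proof -
  have e1: "fails T1 A C v \<longleftrightarrow> fails (gc (J - {w})) A C v"
    using fails_TC[OF vN v_Reach] unfolding Fg_def .
  have e2: "fails (gc (J - {w})) A C w \<longleftrightarrow> fails (gc Iw) A C w"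
    using Fg_cong[of "J - {w}" A C w Iw] Fg_cong[of Iw A C w "J - {w}"] G1 by blast
  have e3: "fails (gc Iw) A C w \<longleftrightarrow> fails T3 A C w"
    using fails_TC[OF w_props(1) v_Reach] unfolding Fg_def by simp
  have e4: "fails (gc J) A C' v \<longleftrightarrow> fails T2 A C' v" for C'
    using fails_TC[OF vN v_Reach] unfolding Fg_def by simp
  show ?thesis using e1 Fg_subst[OF wJ, of A C v] e2 e3 e4 by simp
qed

abbreviation "B1 \<equiv> BEs T1"
abbreviation "B2 \<equiv> BEs T2"
abbreviation "B3 \<equiv> BEs T3"

lemma B1_sub: "B1 \<subseteq> B2 \<union> B3"
proof
  fix x assume "x \<in> B1"
  then have x: "x \<in> Reach v (J - {w})" "x \<notin> J - {w}" "gam T x = BE" by (auto simp: BEs_TC)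
  from R3[OF x(1)] show "x \<in> B2 \<union> B3"
  proof
    assume xv: "x \<in> Reach v J"
    show ?thesis
    proof (cases "x = w")
      case True
      then have "x \<in> Reach w Iw" "x \<notin> Iw" using v_Reach irr by (auto simp: Iset_iff)
      then show ?thesis using x by (auto simp: BEs_TC)
    next
      case False then show ?thesis using xv x by (auto simp: BEs_TC)
    qed
  next
    assume "x \<in> Reach w (J - {w})"
    then have "x \<in> Reach w Iw" using Reach_w by simp
    moreover have "x \<notin> Iw" using G1[OF Reach_E[OF \<open>x \<in> Reach w Iw\<close>]] x(2) by blast
    ultimately show ?thesis using x by (auto simp: BEs_TC)
  qed
qed

lemma B23: "B2 \<inter> B3 = {}"
proof -
  have "x \<notin> B2" if "x \<in> B3" for x
  proof -
    have x: "x \<in> Reach w Iw" "x \<notin> Iw" using that by (auto simp: BEs_TC)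
    show ?thesis
    proof (cases "x = w")
      case True then show ?thesis using wJ by (auto simp: BEs_TC)
    next
      case False then show ?thesis using G3[OF x False] by (auto simp: BEs_TC)
    qed
  qed
  then show ?thesis by blast
qed

lemma finB: "finite B2" "finite B3" "finite B1"
proof -
  show "finite B2" using finite_Reach[OF vN] by (rule finite_subset[rotated]) (auto simp: BEs_TC)
  show "finite B3" using finite_Reach[OF w_props(1)] by (rule finite_subset[rotated]) (auto simp: BEs_TC)
  then show "finite B1" using B1_sub \<open>finite B2\<close> finite_subset by blast
qed

lemma unrel_step: "unrel T1 C = unrel T3 C * unrel T2 (insert w C) + (1 - unrel T3 C) * unrel T2 (C - {w})"
proof -
  let ?p = "prob T"
  let ?i = "\<lambda>b. if b then 1 else (0::real)"
  let ?B = "B2 \<union> B3"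
  let ?C' = "\<lambda>A3. if fails T3 A3 C w then insert w C else C - {w}"
  have fB: "finite ?B" using finB by simp
  have U2: "unrel T2 C' = (\<Sum>A2\<in>Pow B2. wt ?p B2 A2 * ?i (fails T2 A2 C' v))" for C'
    by (simp add: unrel_wt TC_prob TC_root)
  have U3: "unrel T3 C = (\<Sum>A3\<in>Pow B3. wt ?p B3 A3 * ?i (fails T3 A3 C w))"
    by (simp add: unrel_wt TC_prob TC_root)
  have "unrel T1 C = (\<Sum>A\<in>Pow B1. wt ?p B1 A * ?i (fails T1 A C v))"
    by (simp add: unrel_wt TC_prob TC_root)
  also have "\<dots> = (\<Sum>A\<in>Pow ?B. wt ?p ?B A * ?i (fails T1 A C v))"
  proof (rule marg[symmetric, OF fB B1_sub])
    fix A show "?i (fails T1 A C v) = ?i (fails T1 (A \<inter> B1) C v)"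
      using fails_BEs_iff[of T1 A C v] by simp
  qed
  also have "\<dots> = (\<Sum>A2\<in>Pow B2. \<Sum>A3\<in>Pow B3. wt ?p ?B (A2 \<union> A3) * ?i (fails T1 (A2 \<union> A3) C v))"
    by (rule Pow_split_sum) (use finB B23 in auto)
  also have "\<dots> = (\<Sum>A2\<in>Pow B2. \<Sum>A3\<in>Pow B3. wt ?p B3 A3 * (wt ?p B2 A2 * ?i (fails T2 A2 (?C' A3) v)))"
  proof (intro sum.cong refl)
    fix A2 A3 assume a: "A2 \<in> Pow B2" "A3 \<in> Pow B3"
    have w: "wt ?p ?B (A2 \<union> A3) = wt ?p B2 A2 * wt ?p B3 A3"
      by (rule wt_union) (use a finB B23 in auto)
    have i3: "(A2 \<union> A3) \<inter> B3 = A3" using a B23 by auto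
    have i2: "(A2 \<union> A3) \<inter> B2 = A2" using a B23 by auto
    have a3: "A3 \<inter> B3 = A3" and a2: "A2 \<inter> B2 = A2" using a by auto
    have f3: "fails T3 (A2 \<union> A3) C w \<longleftrightarrow> fails T3 A3 C w"
    proof -
      have "fails T3 (A2 \<union> A3) C w \<longleftrightarrow> fails T3 ((A2 \<union> A3) \<inter> B3) C w" by (rule fails_BEs_iff)
      also have "\<dots> \<longleftrightarrow> fails T3 (A3 \<inter> B3) C w" unfolding i3 a3 ..
      also have "\<dots> \<longleftrightarrow> fails T3 A3 C w" by (rule fails_BEs_iff[symmetric])
      finally show ?thesis .
    qed
    have f2: "fails T2 (A2 \<union> A3) C' v \<longleftrightarrow> fails T2 A2 C' v" for C'
    proof -
      have "fails T2 (A2 \<union> A3) C' v \<longleftrightarrow> fails T2 ((A2 \<union> A3) \<inter> B2) C' v" by (rule fails_BEs_iff)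
      also have "\<dots> \<longleftrightarrow> fails T2 (A2 \<inter> B2) C' v" unfolding i2 a2 ..
      also have "\<dots> \<longleftrightarrow> fails T2 A2 C' v" by (rule fails_BEs_iff[symmetric])
      finally show ?thesis .
    qed
    have "fails T1 (A2 \<union> A3) C v \<longleftrightarrow> fails T2 A2 (?C' A3) v"
      using fails_link[of "A2 \<union> A3" C] f3 f2 by simp
    then show "wt ?p ?B (A2 \<union> A3) * ?i (fails T1 (A2 \<union> A3) C v) = wt ?p B3 A3 * (wt ?p B2 A2 * ?i (fails T2 A2 (?C' A3) v))"
      using w by simp
  qed
  also have "\<dots> = (\<Sum>A3\<in>Pow B3. wt ?p B3 A3 * unrel T2 (?C' A3))"
    by (subst sum.swap) (simp add: U2 sum_distrib_left)
  also have "\<dots> = (\<Sum>A3\<in>Pow B3. wt ?p B3 A3 * ?i (fails T3 A3 C w)) * unrel T2 (insert w C)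
       + ((\<Sum>A3\<in>Pow B3. wt ?p B3 A3) - (\<Sum>A3\<in>Pow B3. wt ?p B3 A3 * ?i (fails T3 A3 C w))) * unrel T2 (C - {w})"
  proof -
    have "(\<Sum>A3\<in>Pow B3. wt ?p B3 A3 * unrel T2 (?C' A3)) = (\<Sum>A3\<in>Pow B3.
        (wt ?p B3 A3 * ?i (fails T3 A3 C w)) * unrel T2 (insert w C) + (wt ?p B3 A3 - wt ?p B3 A3 * ?i (fails T3 A3 C w)) * unrel T2 (C - {w}))"
      by (rule sum.cong) auto
    also have "\<dots> = (\<Sum>A3\<in>Pow B3. wt ?p B3 A3 * ?i (fails T3 A3 C w)) * unrel T2 (insert w C)
       + ((\<Sum>A3\<in>Pow B3. wt ?p B3 A3) - (\<Sum>A3\<in>Pow B3. wt ?p B3 A3 * ?i (fails T3 A3 C w))) * unrel T2 (C - {w})"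
      by (simp only: sum.distrib sum_distrib_right[symmetric] sum_subtractf)
    finally show ?thesis .
  qed
  also have "\<dots> = unrel T3 C * unrel T2 (insert w C) + (1 - unrel T3 C) * unrel T2 (C - {w})"
    using U3 wt_sum1[OF finB(2)] by simp
  finally show ?thesis .
qed

lemma J_minus: "J - {w} = Iset T v \<union> (S - {w})"
proof -
  have "w \<notin> Iset T v" using w_props irr by (auto simp: Iset_iff)
  then show ?thesis by blast
qed

lemma good_step:
  assumes acc: "good v J acc" and gw: "good w Iw h"
  shows "good v (J - {w}) (psubst acc w h)"
proof -
  have X1: "CBEs T1 = Reach v (J - {w}) \<inter> (J - {w})" using CBEs_TC[OF vN] .
  have X2: "CBEs T2 = Reach v J \<inter> J" using CBEs_TC[OF vN] .
  have X3: "CBEs T3 = Reach w Iw \<inter> Iw" using CBEs_TC[OF w_props(1)] .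
  have sub: "(CBEs T2 - {w}) \<union> CBEs T3 \<subseteq> CBEs T1"
  proof
    fix x assume "x \<in> (CBEs T2 - {w}) \<union> CBEs T3"
    then show "x \<in> CBEs T1"
    proof
      assume "x \<in> CBEs T2 - {w}" then show ?thesis using X1 X2 R1 by blast
    next
      assume x3: "x \<in> CBEs T3"
      then have "x \<in> Reach w Iw" "x \<in> Iw" using X3 by auto
      then have "x \<in> J - {w}" using G1[OF Reach_E] by blast
      moreover have "x \<in> Reach v (J - {w})" using \<open>x \<in> Reach w Iw\<close> Reach_w R4 by blast
      ultimately show ?thesis using X1 by blast
    qed
  qed
  have inA: "inA (CBEs T1) (psubst acc w h)"
    using inA_mono[OF inA_psubst[of "CBEs T2" acc "CBEs T3" h w] sub] acc gw unfolding good_def by blast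
  have "peval N (psubst acc w h) C = unrel T1 C" for C
    using peval_psubst[OF finN w_props(1), of acc h C] unrel_step[of C] acc gw unfolding good_def by simp
  then show ?thesis using inA unfolding good_def by blast
qed

end

context ftl begin

lemma inner:
  "inner_run T g S acc res \<Longrightarrow> v \<in> N \<Longrightarrow> S \<subseteq> ToDo_v T v \<Longrightarrow>
   (\<forall>x\<in>ToDo_v T v. \<forall>u\<in>S. (u, x) \<in> E\<^sup>+ \<longrightarrow> x \<in> S) \<Longrightarrow>
   good v (Iset T v \<union> S) acc \<Longrightarrow> (\<forall>w\<in>ToDo_v T v. good w (Iset T w) (g w)) \<Longrightarrow>
   good v (Iset T v) res"
proof (induction rule: inner_run.induct)
  case (inner_done acc)
  then show ?case by simp
next
  case (inner_step w S acc res)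
  have wmax: "\<forall>u\<in>S. (u, w) \<notin> E\<^sup>+" using inner_step.hyps(2) by (simp add: plt_iff)
  interpret sc: stepctx T v S w
    by unfold_locales (use ft inner_step wmax in auto)
  have gw: "good w (Iset T w) (g w)" using inner_step by blast
  have g1: "good v (Iset T v \<union> (S - {w})) (psubst acc w (g w))"
    using sc.good_step[OF inner_step.prems(4) gw] sc.J_minus by simp
  have down: "\<forall>x\<in>ToDo_v T v. \<forall>u\<in>S - {w}. (u, x) \<in> E\<^sup>+ \<longrightarrow> x \<in> S - {w}"
    using inner_step.prems(3) wmax by blast
  show ?case
    by (rule inner_step.IH) (use inner_step.prems g1 down in auto)
qed

lemma prod_ind1: "finite A \<Longrightarrow> (\<Prod>c\<in>A. 1 - (if c \<in> C then 1 else 0 :: real)) = (if A \<inter> C = {} then 1 else 0)"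
  by (induction A rule: finite_induct) auto

lemma prod_ind2: "finite A \<Longrightarrow> (\<Prod>c\<in>A. (if c \<in> C then 1 else 0 :: real)) = (if A \<subseteq> C then 1 else 0)"
  by (induction A rule: finite_induct) auto

lemma child_J0: "v \<in> N \<Longrightarrow> c \<in> children T v \<Longrightarrow> c \<in> Iset T v \<union> ToDo_v T v"
proof -
  assume vN: "v \<in> N" and "c \<in> children T v"
  then have vc: "(v, c) \<in> E" by (simp add: children_def)
  then have vc': "(v, c) \<in> E\<^sup>+" by simp
  have cN: "c \<in> N" using edgeN[OF vc] by simp
  have cr: "c \<noteq> r" using not_r[OF vc'] .
  define d where "d = idom T c"
  have dc: "(d, c) \<in> E\<^sup>+" "(r, c) \<notin> (Ed d)\<^sup>*" using idom_props[OF cN cr] unfolding d_def by auto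
  have "(d, v) \<in> E\<^sup>*"
  proof (rule ccontr)
    assume ndv: "(d, v) \<notin> E\<^sup>*"
    have "(r, v) \<in> (Ed d)\<^sup>*" using Ed_avoid_nanc[OF reach[OF vN] ndv] .
    moreover have "(v, c) \<in> Ed d" using vc ndv irr dc(1) unfolding Ed_def by auto
    ultimately have "(r, c) \<in> (Ed d)\<^sup>*" by (rule rtrancl.rtrancl_into_rtrancl)
    then show False using dc(2) by simp
  qed
  then have "d = v \<or> (d, v) \<in> E\<^sup>+" using rt_tr by metis
  then show ?thesis
  proof
    assume "d = v" then show ?thesis using cN cr unfolding d_def by (simp add: ToDo_iff)
  next
    assume "(d, v) \<in> E\<^sup>+" then show ?thesis using cN vc' unfolding d_def by (simp add: Iset_iff)
  qed
qed

lemma v_notJ0: "v \<in> N \<Longrightarrow> v \<notin> Iset T v \<union> ToDo_v T v"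
  using irr idom_lt by (auto simp: Iset_iff ToDo_iff) (metis irr)

lemma fails_CBEnode: "fails (gc K) A C c \<Longrightarrow> c \<in> K \<Longrightarrow> c \<in> C"
  by (induction rule: fails.induct) (auto simp: gc_simps)

lemma init_good:
  assumes vN: "v \<in> N" and vg: "gam T v \<noteq> BE"
  shows "good v (Iset T v \<union> ToDo_v T v) (init_poly T v)"
proof -
  let ?J = "Iset T v \<union> ToDo_v T v"
  let ?ch = "children T v"
  have chJ: "?ch \<subseteq> ?J" using child_J0[OF vN] by blast
  have vJ: "v \<notin> ?J" using v_notJ0[OF vN] .
  have chN: "?ch \<subseteq> N" using edgeN by (auto simp: children_def)
  have finch: "finite ?ch" using chN finN finite_subset by blast
  have R: "Reach v ?J = insert v ?ch"
  proof
    show "Reach v ?J \<subseteq> insert v ?ch"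
    proof
      fix x assume "x \<in> Reach v ?J"
      then have "(v, x) \<in> (Ecut ?J)\<^sup>*" by (simp add: Reach_def)
      then show "x \<in> insert v ?ch"
      proof (induction rule: rtrancl_induct)
        case (step y z)
        then have "y \<notin> ?J" "(y, z) \<in> E" by (auto simp: Ecut_def)
        then have "y = v" using step chJ by blast
        then show ?case using \<open>(y, z) \<in> E\<close> by (simp add: children_def)
      qed simp
    qed
  next
    show "insert v ?ch \<subseteq> Reach v ?J"
    proof
      fix x assume "x \<in> insert v ?ch"
      then show "x \<in> Reach v ?J"
      proof
        assume "x \<in> ?ch"
        then have "(v, x) \<in> Ecut ?J" using vJ by (auto simp: children_def Ecut_def)
        then show ?thesis using Reach_step[OF v_Reach] by blast
      qed (simp add: v_Reach)
    qed
  qed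
  have BE0: "BEs (TC v ?J) = {}" using R chJ vg by (auto simp: BEs_TC)
  have X: "CBEs (TC v ?J) = ?ch" using CBEs_TC[OF vN] R chJ vJ by auto
  have gv: "gam T v = OR \<or> gam T v = AND" using vg noCBE[OF vN] by (cases "gam T v") auto
  have ch_fail: "fails (gc ?J) A C c \<longleftrightarrow> c \<in> C" if "c \<in> ?ch" for c A C
  proof
    assume "fails (gc ?J) A C c" then show "c \<in> C" using fails_CBEnode that chJ by blast
  next
    assume "c \<in> C" then show "fails (gc ?J) A C c"
      using that chJ chN by (intro fails.fails_CBE) (auto simp: gc_simps)
  qed
  have edges_v: "(v, y) \<in> edges (gc ?J) \<longleftrightarrow> y \<in> ?ch" for y
    using vJ by (auto simp: gc_simps Ecut_def children_def)
  have Fv: "fails (gc ?J) {} C v \<longleftrightarrow> (if gam T v = OR then ?ch \<inter> C \<noteq> {} else ?ch \<subseteq> C)" for C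
  proof
    assume "fails (gc ?J) {} C v"
    then show "(if gam T v = OR then ?ch \<inter> C \<noteq> {} else ?ch \<subseteq> C)"
    proof (cases rule: fails.cases)
      case fails_BE then show ?thesis by simp
    next
      case fails_CBE then show ?thesis using vJ noCBE[OF vN] by (simp add: gc_simps)
    next
      case (fails_OR w)
      then have "w \<in> ?ch" using edges_v by blast
      then have "w \<in> C" using ch_fail[of w "{}"] fails_OR(4) by blast
      then show ?thesis using fails_OR vJ \<open>w \<in> ?ch\<close> by (auto simp: gc_simps)
    next
      case fails_AND
      have "\<forall>c\<in>?ch. c \<in> C" using fails_AND edges_v ch_fail[of _ "{}"] by simp
      then show ?thesis using fails_AND vJ by (auto simp: gc_simps)
    qed
  next
    assume h: "(if gam T v = OR then ?ch \<inter> C \<noteq> {} else ?ch \<subseteq> C)"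
    show "fails (gc ?J) {} C v"
    proof (cases "gam T v = OR")
      case True
      then obtain c where "c \<in> ?ch" "c \<in> C" using h by auto
      show ?thesis
      proof (rule fails.fails_OR[where w=c])
        show "v \<in> nodes (gc ?J)" using vN by (simp add: gc_simps)
        show "gam (gc ?J) v = OR" using True vJ by (simp add: gc_simps)
        show "(v, c) \<in> edges (gc ?J)" using edges_v \<open>c \<in> ?ch\<close> by blast
        show "fails (gc ?J) {} C c" using ch_fail \<open>c \<in> ?ch\<close> \<open>c \<in> C\<close> by blast
      qed
    next
      case False
      then have "gam T v = AND" using gv by simp
      then show ?thesis using False h vN vJ edges_v ch_fail
        by (intro fails.fails_AND) (auto simp: gc_simps)
    qed
  qed
  have U: "unrel (TC v ?J) C = (if (if gam T v = OR then ?ch \<inter> C \<noteq> {} else ?ch \<subseteq> C) then 1 else 0)" for C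
  proof -
    have "unrel (TC v ?J) C = (if fails (TC v ?J) {} C v then 1 else 0)"
      unfolding unrel_def BE0 by (simp add: TC_root)
    also have "fails (TC v ?J) {} C v \<longleftrightarrow> fails (gc ?J) {} C v"
      using fails_TC[OF vN v_Reach] unfolding Fg_def .
    finally show ?thesis using Fv by simp
  qed
  have P: "peval N (init_poly T v) C = (if (if gam T v = OR then ?ch \<inter> C \<noteq> {} else ?ch \<subseteq> C) then 1 else 0)" for C
  proof -
    have pv: "\<And>c. c \<in> ?ch \<Longrightarrow> peval N (pvar c) C = (if c \<in> C then 1 else 0)"
      using peval_var[OF finN] chN by blast
    show ?thesis
    proof (cases "gam T v = OR")
      case True
      have "peval N (init_poly T v) C = 1 - (\<Prod>c\<in>?ch. 1 - peval N (pvar c) C)"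
        unfolding init_poly_def using True
        by (simp add: peval_psub peval_const[OF finN] peval_pprod[OF finN finch])
      also have "\<dots> = 1 - (\<Prod>c\<in>?ch. 1 - (if c \<in> C then 1 else 0 :: real))"
        using pv by simp
      finally show ?thesis using True prod_ind1[OF finch, of C] by simp
    next
      case False
      have "peval N (init_poly T v) C = (\<Prod>c\<in>?ch. peval N (pvar c) C)"
        unfolding init_poly_def using False by (simp add: peval_pprod[OF finN finch])
      also have "\<dots> = (\<Prod>c\<in>?ch. (if c \<in> C then 1 else 0 :: real))"
        using pv by simp
      finally show ?thesis using False prod_ind2[OF finch, of C] by simp
    qed
  qed
  have i1: "inA ?ch (psub (pconst 1) (pvar x))" if "x \<in> ?ch" for x
    using inA_mono[OF inA_sub[OF inA_const inA_var[of x]]] that by simp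
  have i2: "inA ?ch (pvar x)" if "x \<in> ?ch" for x
    using inA_mono[OF inA_var[of x]] that by simp
  have inA1: "inA ?ch (pprod (\<lambda>w. psub (pconst 1) (pvar w)) ?ch)"
    using i1 by (rule inA_pprod[OF finch])
  have inA2: "inA ?ch (pprod pvar ?ch)"
    using i2 by (rule inA_pprod[OF finch])
  have "inA ?ch (init_poly T v)"
    unfolding init_poly_def using inA_sub[OF inA_const inA1] inA2 by auto
  then show ?thesis unfolding good_def X using P U by simp
qed

lemma BE_good:
  assumes vN: "v \<in> N" and vg: "gam T v = BE"
  shows "good v (Iset T v) (pconst (prob T v))"
proof -
  let ?I = "Iset T v"
  have vI: "v \<notin> ?I" using irr by (auto simp: Iset_iff)
  have noch: "children T v = {}" using leaf[OF vN] vg by simp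
  have R: "Reach v ?I = {v}"
  proof
    show "Reach v ?I \<subseteq> {v}"
    proof
      fix x assume "x \<in> Reach v ?I"
      then have "(v, x) \<in> (Ecut ?I)\<^sup>*" by (simp add: Reach_def)
      then show "x \<in> {v}"
      proof (induction rule: rtrancl_induct)
        case (step y z)
        then show ?case using noch by (auto simp: Ecut_def children_def)
      qed simp
    qed
  qed (simp add: v_Reach)
  have B: "BEs (TC v ?I) = {v}" using R vI vg by (auto simp: BEs_TC)
  have X: "CBEs (TC v ?I) = {}" using CBEs_TC[OF vN] R vI by auto
  have F: "fails (TC v ?I) A C v \<longleftrightarrow> v \<in> A" for A C
  proof
    assume "fails (TC v ?I) A C v"
    then show "v \<in> A"
      by (cases rule: fails.cases) (use vI vg in \<open>auto simp: TC_gam\<close>)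
  next
    assume "v \<in> A"
    then show "fails (TC v ?I) A C v"
      using vI vg R by (intro fails.fails_BE) (auto simp: TC_gam TC_nodes)
  qed
  have "unrel (TC v ?I) C = prob T v" for C
  proof -
    have "Pow {v} = {{}, {v}}" by auto
    then show ?thesis unfolding unrel_def B using F by (simp add: TC_root TC_prob)
  qed
  then show ?thesis unfolding good_def X using inA_const peval_const[OF finN] by simp
qed

lemma outer:
  "sfpa_run T ToDo g g' \<Longrightarrow> ToDo \<subseteq> N \<Longrightarrow> (\<forall>x\<in>N - ToDo. \<forall>y. (x, y) \<in> E\<^sup>+ \<longrightarrow> y \<notin> ToDo) \<Longrightarrow>
   (\<forall>x\<in>N - ToDo. good x (Iset T x) (g x)) \<Longrightarrow> (\<forall>x\<in>N. good x (Iset T x) (g' x))"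
proof (induction rule: sfpa_run.induct)
  case (sfpa_done g)
  then show ?case by simp
next
  case (sfpa_BE v ToDo g g')
  have vN: "v \<in> N" using sfpa_BE by blast
  have min: "\<forall>y. (v, y) \<in> E\<^sup>+ \<longrightarrow> y \<notin> ToDo" using sfpa_BE.hyps(2) by (auto simp: plt_iff)
  show ?case
  proof (rule sfpa_BE.IH)
    show "ToDo - {v} \<subseteq> N" using sfpa_BE by blast
    show "\<forall>x\<in>N - (ToDo - {v}). \<forall>y. (x, y) \<in> E\<^sup>+ \<longrightarrow> y \<notin> ToDo - {v}"
      using sfpa_BE.prems(2) min by blast
    show "\<forall>x\<in>N - (ToDo - {v}). good x (Iset T x) ((g(v := pconst (prob T v))) x)"
      using sfpa_BE.prems(3) BE_good[OF vN sfpa_BE.hyps(3)] by auto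
  qed
next
  case (sfpa_gate v ToDo g h g')
  have vN: "v \<in> N" using sfpa_gate by blast
  have min: "\<forall>y. (v, y) \<in> E\<^sup>+ \<longrightarrow> y \<notin> ToDo" using sfpa_gate.hyps(2) by (auto simp: plt_iff)
  have gw: "\<forall>w\<in>ToDo_v T v. good w (Iset T w) (g w)"
  proof
    fix w assume w: "w \<in> ToDo_v T v"
    then have "w \<in> N" "w \<noteq> r" "idom T w = v" by (auto simp: ToDo_iff)
    then have "(v, w) \<in> E\<^sup>+" using idom_lt by metis
    then have "w \<notin> ToDo" using min by blast
    then show "good w (Iset T w) (g w)" using sfpa_gate.prems(3) \<open>w \<in> N\<close> by blast
  qed
  have hg: "good v (Iset T v) h"
    by (rule inner[OF sfpa_gate.hyps(4) vN]) (use init_good[OF vN sfpa_gate.hyps(3)] gw in auto)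
  show ?case
  proof (rule sfpa_gate.IH)
    show "ToDo - {v} \<subseteq> N" using sfpa_gate by blast
    show "\<forall>x\<in>N - (ToDo - {v}). \<forall>y. (x, y) \<in> E\<^sup>+ \<longrightarrow> y \<notin> ToDo - {v}"
      using sfpa_gate.prems(2) min by blast
    show "\<forall>x\<in>N - (ToDo - {v}). good x (Iset T x) ((g(v := h)) x)"
      using sfpa_gate.prems(3) hg by auto
  qed
qed

end

theorem theorem28:
  fixes T :: "'v ft" and g0 g :: "'v \<Rightarrow> 'v sfpoly" and v :: 'v
  assumes "is_ft T"
    and "sfpa_run T (nodes T) g0 g"
    and "v \<in> nodes T"
  shows "g v = poly_of (CBEs (restrict_cut (subtree T v) (Iset T v)))
                       (unrel (restrict_cut (subtree T v) (Iset T v)))"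
proof -
  interpret ftl T by (rule ftl.intro) (rule assms(1))
  have "\<forall>x\<in>nodes T. good x (Iset T x) (g x)"
    by (rule outer[OF assms(2)]) auto
  then have gd: "good v (Iset T v) (g v)" using assms(3) by blast
  let ?X = "CBEs (TC v (Iset T v))"
  have XN: "?X \<subseteq> nodes T" using CBEs_TC[OF assms(3)] Reach_N[OF assms(3)] by blast
  have finX: "finite ?X" using XN finN finite_subset by blast
  have "poly_of ?X (unrel (TC v (Iset T v))) = g v"
  proof (rule poly_of_eq[OF finX])
    show "inA ?X (g v)" using gd unfolding good_def by blast
    fix C assume "C \<subseteq> ?X"
    have "peval ?X (g v) C = peval (nodes T) (g v) C"
      using peval_inA[OF \<open>inA ?X (g v)\<close> XN finN] by simp
    then show "peval ?X (g v) C = unrel (TC v (Iset T v)) C" using gd unfolding good_def by simp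
  qed
  then show ?thesis unfolding TC_def by simp
qed

end
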